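(* Let a qubit stabilizer subsystem code have encoded qubits $\mathcal{H}_e=\bigotimes_{j=1}^{n_L}\mathcal{H}_j$ and encoding isometry $V$, and let $S\subseteq\{1,\dots,n_L\}$ determine the logical subsystem. If $2\le p(S)\le 2d(S)-2$, then every transversal dressed-CSP unitary $U$ satisfies $V^\dagger UV=U_L\otimes U_J$ with $U_L\in\mathcal{C}_2$.
   Context: Stabilizer code: abelian subgroup of the Pauli group not containing $-\mathrm{Id}$, code space its $+1$ eigenspace, encoded space with tensor product structure of encoded qubits and basis such that codespace-preserving physical Paulis implement encoded Paulis; $\Pi=VV^\dagger$. Logical subsystem $\mathcal{H}_L=\bigotimes_{j\in S}\mathcal{H}_j$, junk $\mathcal{H}_J=\bigotimes_{j\notin S}\mathcal{H}_j$. $A$ is CSP if $[A,\Pi]=0$; dressed-CSP if moreover $V^\dagger AV=A_L\otimes A_J$; bare-CSP if also $A_J=\mathrm{Id}_J$. A region $R$ (set of physical qubits) is correctable w.r.t. $S$ if every $A_L\in\mathcal{B}(\mathcal{H}_L)$ is implemented as $A_L\otimes\mathrm{Id}_J$ by a bare-CSP operator supported on $R^c$ (i.e. of the form $A_{R^c}\otimes\mathrm{Id}_R$). Code distance $d(S)=\min\{|R|:R\text{ not correctable w.r.t. }S\}$; code price $p(S)=\min\{|R|:R^c\text{ correctable w.r.t. }S\}$, sizes counted in qubits. Transversal: tensor product of single-qubit unitaries. Clifford hierarchy on $\mathcal{H}_L$: $\mathcal{C}_0=\mathbb{C}\,\mathrm{Id}_L$, $\mathcal{C}_1=\{cP\}$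 with $P$ Pauli on $\mathcal{H}_L$, $\mathcal{C}_k=\{U:\forall P\in\mathcal{C}_1,\ UPU^\dagger P^\dagger\in\mathcal{C}_{k-1}\}$ for $k\ge2$. *)

theory Defs
  imports Complex_Main
begin

text \<open>A configuration of a set Q of qubits is a function nat => bool that is False
outside Q (False = |0>, True = |1>).  An operator from qubits R to qubits Q is a
complex matrix indexed by configurations, vanishing outside cfgs Q x cfgs R.
Vectors on Q are operators from the empty qubit set to Q (a single column).\<close>

type_synonym cfg = "nat \<Rightarrow> bool"
type_synonym qop = "cfg \<Rightarrow> cfg \<Rightarrow> complex"

definition cfgs :: "nat set \<Rightarrow> cfg set" where
  "cfgs Q = {x. \<forall>q. q \<notin> Q \<longrightarrow> \<not> x q}"

definition rst :: "nat set \<Rightarrow> cfg \<Rightarrow> cfg" where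
  "rst Q x = (\<lambda>q. q \<in> Q \<and> x q)"

definition restr :: "nat set \<Rightarrow> nat set \<Rightarrow> qop \<Rightarrow> qop" where
  "restr Q R A = (\<lambda>x y. if x \<in> cfgs Q \<and> y \<in> cfgs R then A x y else 0)"

definition isop :: "nat set \<Rightarrow> nat set \<Rightarrow> qop \<Rightarrow> bool" where
  "isop Q R A \<longleftrightarrow> restr Q R A = A"

definition mmul :: "nat set \<Rightarrow> qop \<Rightarrow> qop \<Rightarrow> qop" where
  "mmul Q A B = (\<lambda>x y. \<Sum>z\<in>cfgs Q. A x z * B z y)"

definition adj :: "qop \<Rightarrow> qop" where
  "adj A = (\<lambda>x y. cnj (A y x))"

definition scal :: "complex \<Rightarrow> qop \<Rightarrow> qop" where
  "scal c A = (\<lambda>x y. c * A x y)"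

definition ident :: "nat set \<Rightarrow> qop" where
  "ident Q = restr Q Q (\<lambda>x y. if x = y then 1 else 0)"

definition tens :: "nat set \<Rightarrow> nat set \<Rightarrow> qop \<Rightarrow> qop \<Rightarrow> qop" where
  "tens Q1 Q2 A B = restr (Q1 \<union> Q2) (Q1 \<union> Q2)
     (\<lambda>x y. A (rst Q1 x) (rst Q1 y) * B (rst Q2 x) (rst Q2 y))"

text \<open>Single-qubit Paulis: 0 = I, 1 = X, 2 = Y, 3 = Z (matrix entry row a, column b).\<close>
definition sigma :: "nat \<Rightarrow> bool \<Rightarrow> bool \<Rightarrow> complex" where
  "sigma k a b =
     (if k = 0 then (if a = b then 1 else 0)
      else if k = 1 then (if a \<noteq> b then 1 else 0)
      else if k = 2 then (if a = b then 0 else if a then \<i> else - \<i>)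
      else (if a = b then (if a then -1 else 1) else 0))"

definition pauli_ops :: "nat set \<Rightarrow> qop set" where
  "pauli_ops Q = {restr Q Q (\<lambda>x y. c * (\<Prod>q\<in>Q. sigma (k q) (x q) (y q))) | c k.
                    c \<in> {1, -1, \<i>, - \<i>} \<and> (\<forall>q. k q < 4)}"

text \<open>Physical qubits {..<n}, encoded qubits {..<nL}.  G is the stabilizer group,
V the encoding isometry from the encoded space onto the code space.\<close>
definition code_proj :: "nat \<Rightarrow> nat \<Rightarrow> qop \<Rightarrow> qop" where
  "code_proj n nL V = mmul {..<nL} V (adj V)"

definition stabilizer_code :: "nat \<Rightarrow> nat \<Rightarrow> qop set \<Rightarrow> qop \<Rightarrow> bool" where
  "stabilizer_code n nL G V \<longleftrightarrow>
     G \<subseteq> pauli_ops {..<n} \<and>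
     ident {..<n} \<in> G \<and>
     (\<forall>g\<in>G. \<forall>h\<in>G. mmul {..<n} g h \<in> G) \<and>
     (\<forall>g\<in>G. \<forall>h\<in>G. mmul {..<n} g h = mmul {..<n} h g) \<and>
     scal (-1) (ident {..<n}) \<notin> G \<and>
     isop {..<n} {..<nL} V \<and>
     mmul {..<n} (adj V) V = ident {..<nL} \<and>
     {\<psi>. isop {..<n} {} \<psi> \<and> (\<forall>g\<in>G. mmul {..<n} g \<psi> = \<psi>)}
       = {mmul {..<nL} V \<phi> | \<phi>. isop {..<nL} {} \<phi>} \<and>
     (\<forall>P\<in>pauli_ops {..<n}.
        mmul {..<n} P (code_proj n nL V) = mmul {..<n} (code_proj n nL V) P \<longrightarrow>
        mmul {..<n} (adj V) (mmul {..<n} P V) \<in> pauli_ops {..<nL})"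

definition CSP :: "nat \<Rightarrow> nat \<Rightarrow> qop \<Rightarrow> qop \<Rightarrow> bool" where
  "CSP n nL V A \<longleftrightarrow> mmul {..<n} A (code_proj n nL V) = mmul {..<n} (code_proj n nL V) A"

definition logical_action :: "nat \<Rightarrow> qop \<Rightarrow> qop \<Rightarrow> qop" where
  "logical_action n V A = mmul {..<n} (adj V) (mmul {..<n} A V)"

definition dressed_CSP :: "nat \<Rightarrow> nat \<Rightarrow> qop \<Rightarrow> nat set \<Rightarrow> qop \<Rightarrow> bool" where
  "dressed_CSP n nL V S A \<longleftrightarrow> CSP n nL V A \<and>
     (\<exists>AL AJ. isop S S AL \<and> isop ({..<nL} - S) ({..<nL} - S) AJ \<and>
        logical_action n V A = tens S ({..<nL} - S) AL AJ)"

definition bare_CSP :: "nat \<Rightarrow> nat \<Rightarrow> qop \<Rightarrow> nat set \<Rightarrow> qop \<Rightarrow> bool" where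
  "bare_CSP n nL V S A \<longleftrightarrow> CSP n nL V A \<and>
     (\<exists>AL. isop S S AL \<and>
        logical_action n V A = tens S ({..<nL} - S) AL (ident ({..<nL} - S)))"

definition correctable :: "nat \<Rightarrow> nat \<Rightarrow> qop \<Rightarrow> nat set \<Rightarrow> nat set \<Rightarrow> bool" where
  "correctable n nL V S R \<longleftrightarrow>
     (\<forall>AL. isop S S AL \<longrightarrow>
        (\<exists>A. isop ({..<n} - R) ({..<n} - R) A \<and>
             (let B = tens ({..<n} - R) R A (ident R) in
                CSP n nL V B \<and>
                logical_action n V B = tens S ({..<nL} - S) AL (ident ({..<nL} - S)))))"

definition code_distance :: "nat \<Rightarrow> nat \<Rightarrow> qop \<Rightarrow> nat set \<Rightarrow> nat" where
  "code_distance n nL V S =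
     Inf {card R | R. R \<subseteq> {..<n} \<and> \<not> correctable n nL V S R}"

definition code_price :: "nat \<Rightarrow> nat \<Rightarrow> qop \<Rightarrow> nat set \<Rightarrow> nat" where
  "code_price n nL V S =
     Inf {card R | R. R \<subseteq> {..<n} \<and> correctable n nL V S ({..<n} - R)}"

definition unitary1 :: "(bool \<Rightarrow> bool \<Rightarrow> complex) \<Rightarrow> bool" where
  "unitary1 u \<longleftrightarrow>
     (\<forall>a c. (\<Sum>b\<in>UNIV. u a b * cnj (u c b)) = (if a = c then 1 else 0)) \<and>
     (\<forall>a c. (\<Sum>b\<in>UNIV. cnj (u b a) * u b c) = (if a = c then 1 else 0))"

definition transversal :: "nat \<Rightarrow> qop \<Rightarrow> bool" where
  "transversal n U \<longleftrightarrow>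
     (\<exists>u. (\<forall>q<n. unitary1 (u q)) \<and>
          U = restr {..<n} {..<n} (\<lambda>x y. \<Prod>q\<in>{..<n}. u q (x q) (y q)))"

fun cliff :: "nat set \<Rightarrow> nat \<Rightarrow> qop set" where
  "cliff S 0 = {scal c (ident S) | c. True}"
| "cliff S (Suc 0) = {scal c P | c P. P \<in> pauli_ops S}"
| "cliff S (Suc (Suc k)) =
     {U. isop S S U \<and>
         (\<forall>P\<in>cliff S 1. mmul S (mmul S (mmul S U P) (adj U)) (adj P) \<in> cliff S (Suc k))}"

end

theory Submission
  imports Defs
begin

lemma cfgs_rst[simp]: "rst Q x \<in> cfgs Q" by (simp add: cfgs_def rst_def)
lemma rst_id[simp]: "x \<in> cfgs Q \<Longrightarrow> rst Q x = x"
  by (auto simp: cfgs_def rst_def fun_eq_iff)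
lemma cfgs_empty: "cfgs {} = {\<lambda>_. False}" by (auto simp: cfgs_def)

lemma finite_cfgs[simp]: assumes "finite Q" shows "finite (cfgs Q)"
proof -
  have "cfgs Q \<subseteq> (\<lambda>A q. q \<in> A) ` Pow Q"
  proof
    fix x assume "x \<in> cfgs Q"
    then have "x = (\<lambda>q. q \<in> {q. x q})" "{q. x q} \<in> Pow Q" by (auto simp: cfgs_def)
    then show "x \<in> (\<lambda>A q. q \<in> A) ` Pow Q" by blast
  qed
  then show ?thesis using assms by (meson finite_Pow_iff finite_imageI finite_subset)
qed

lemma isopD: "isop Q R A \<Longrightarrow> x \<notin> cfgs Q \<or> y \<notin> cfgs R \<Longrightarrow> A x y = 0"
proof -
  assume a: "isop Q R A" and b: "x \<notin> cfgs Q \<or> y \<notin> cfgs R"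
  have "A x y = restr Q R A x y" using a by (simp add: isop_def)
  also have "\<dots> = 0" using b by (auto simp: restr_def)
  finally show ?thesis .
qed

lemma isopI: "(\<And>x y. x \<notin> cfgs Q \<or> y \<notin> cfgs R \<Longrightarrow> A x y = 0) \<Longrightarrow> isop Q R A"
  unfolding isop_def restr_def fun_eq_iff by simp

lemma isop_eqI: "isop Q R A \<Longrightarrow> isop Q R B \<Longrightarrow> (\<And>x y. x \<in> cfgs Q \<Longrightarrow> y \<in> cfgs R \<Longrightarrow> A x y = B x y) \<Longrightarrow> A = B"
proof (rule ext, rule ext)
  fix x y assume "isop Q R A" "isop Q R B" and h: "(\<And>x y. x \<in> cfgs Q \<Longrightarrow> y \<in> cfgs R \<Longrightarrow> A x y = B x y)"
  then show "A x y = B x y" by (cases "x \<in> cfgs Q \<and> y \<in> cfgs R") (auto simp: isopD)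
qed

lemma isop_restr[simp]: "isop Q R (restr Q R A)"
  by (rule isopI) (auto simp: restr_def)

lemma mmul_assoc: "mmul Q (mmul R A B) C = mmul R A (mmul Q B C)"
proof (rule ext, rule ext)
  fix x y
  have "mmul Q (mmul R A B) C x y = (\<Sum>z\<in>cfgs Q. \<Sum>w\<in>cfgs R. A x w * B w z * C z y)"
    unfolding mmul_def by (simp add: sum_distrib_right)
  also have "\<dots> = (\<Sum>w\<in>cfgs R. \<Sum>z\<in>cfgs Q. A x w * (B w z * C z y))"
    by (subst sum.swap) (simp add: mult.assoc)
  also have "\<dots> = mmul R A (mmul Q B C) x y"
    unfolding mmul_def by (simp add: sum_distrib_left)
  finally show "mmul Q (mmul R A B) C x y = mmul R A (mmul Q B C) x y" .
qed

lemma isop_mmul: "isop Q R A \<Longrightarrow> isop R T B \<Longrightarrow> isop Q T (mmul R A B)"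
  by (rule isopI) (auto simp: mmul_def isopD intro!: sum.neutral)

lemma isop_adj: "isop Q R A \<Longrightarrow> isop R Q (adj A)"
  by (rule isopI) (auto simp: adj_def dest: isopD)

lemma isop_scal: "isop Q R A \<Longrightarrow> isop Q R (scal c A)"
  by (rule isopI) (auto simp: scal_def dest: isopD)

lemma isop_ident[simp]: "isop Q Q (ident Q)"
  by (simp add: ident_def)

lemma ident_apply: "ident Q x y = (if x \<in> cfgs Q \<and> y = x then 1 else 0)"
  by (auto simp: ident_def restr_def)

lemma mmul_ident_left: "finite Q \<Longrightarrow> isop Q R A \<Longrightarrow> mmul Q (ident Q) A = A"
proof (rule ext, rule ext)
  fix x y assume f: "finite Q" and A: "isop Q R A"
  show "mmul Q (ident Q) A x y = A x y"
  proof (cases "x \<in> cfgs Q")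
    case True
    have "mmul Q (ident Q) A x y = (\<Sum>z\<in>cfgs Q. if z = x then A z y else 0)"
      unfolding mmul_def by (rule sum.cong) (auto simp: ident_apply True)
    also have "\<dots> = A x y" using True f by (simp add: sum.delta')
    finally show ?thesis .
  next
    case False
    then show ?thesis using A by (simp add: mmul_def ident_apply isopD)
  qed
qed

lemma mmul_ident_right: "finite R \<Longrightarrow> isop Q R A \<Longrightarrow> mmul R A (ident R) = A"
proof (rule ext, rule ext)
  fix x y assume f: "finite R" and A: "isop Q R A"
  show "mmul R A (ident R) x y = A x y"
  proof (cases "y \<in> cfgs R")
    case True
    have "mmul R A (ident R) x y = (\<Sum>z\<in>cfgs R. if z = y then A x z else 0)"
      unfolding mmul_def by (rule sum.cong) (auto simp: ident_apply True)
    also have "\<dots> = A x y" using True f by (simp add: sum.delta')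
    finally show ?thesis .
  next
    case False
    then show ?thesis using A by (auto simp: mmul_def ident_apply isopD intro!: sum.neutral)
  qed
qed

lemma adj_adj[simp]: "adj (adj A) = A" by (simp add: adj_def)
lemma adj_mmul: "adj (mmul Q A B) = mmul Q (adj B) (adj A)"
  by (simp add: adj_def mmul_def fun_eq_iff mult.commute)
lemma adj_scal: "adj (scal c A) = scal (cnj c) (adj A)"
  by (simp add: adj_def scal_def fun_eq_iff)
lemma adj_ident[simp]: "adj (ident Q) = ident Q"
  by (rule ext, rule ext) (auto simp: adj_def ident_apply)
lemma mmul_scal_left: "mmul Q (scal c A) B = scal c (mmul Q A B)"
  by (simp add: scal_def mmul_def fun_eq_iff sum_distrib_left mult.assoc)
lemma mmul_scal_right: "mmul Q A (scal c B) = scal c (mmul Q A B)"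
  by (simp add: scal_def mmul_def fun_eq_iff sum_distrib_left mult.left_commute)
lemma scal_scal: "scal c (scal d A) = scal (c*d) A"
  by (simp add: scal_def fun_eq_iff)
lemma scal_one[simp]: "scal 1 A = A" by (simp add: scal_def)


definition merge :: "cfg \<Rightarrow> cfg \<Rightarrow> cfg" where "merge a b = (\<lambda>q. a q \<or> b q)"

lemma rst_merge1: "a \<in> cfgs Q1 \<Longrightarrow> b \<in> cfgs Q2 \<Longrightarrow> Q1 \<inter> Q2 = {} \<Longrightarrow> rst Q1 (merge a b) = a"
  by (auto simp: rst_def merge_def cfgs_def fun_eq_iff)
lemma rst_merge2: "a \<in> cfgs Q1 \<Longrightarrow> b \<in> cfgs Q2 \<Longrightarrow> Q1 \<inter> Q2 = {} \<Longrightarrow> rst Q2 (merge a b) = b"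
  by (auto simp: rst_def merge_def cfgs_def fun_eq_iff)
lemma merge_cfgs: "a \<in> cfgs Q1 \<Longrightarrow> b \<in> cfgs Q2 \<Longrightarrow> merge a b \<in> cfgs (Q1 \<union> Q2)"
  by (auto simp: merge_def cfgs_def)
lemma merge_rst: "x \<in> cfgs (Q1 \<union> Q2) \<Longrightarrow> merge (rst Q1 x) (rst Q2 x) = x"
  by (auto simp: merge_def cfgs_def rst_def fun_eq_iff)

lemma sum_split:
  assumes "finite Q1" "finite Q2" "Q1 \<inter> Q2 = {}"
  shows "(\<Sum>z\<in>cfgs (Q1 \<union> Q2). f z) = (\<Sum>a\<in>cfgs Q1. \<Sum>b\<in>cfgs Q2. f (merge a b))"
proof -
  let ?m = "\<lambda>p. merge (fst p) (snd p)"
  have bij: "bij_betw ?m (cfgs Q1 \<times> cfgs Q2) (cfgs (Q1 \<union> Q2))"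
  proof (rule bij_betw_byWitness[where f' = "\<lambda>x. (rst Q1 x, rst Q2 x)"])
    show "\<forall>p\<in>cfgs Q1 \<times> cfgs Q2. (rst Q1 (?m p), rst Q2 (?m p)) = p"
      using rst_merge1[OF _ _ assms(3)] rst_merge2[OF _ _ assms(3)] by auto
    show "\<forall>x\<in>cfgs (Q1 \<union> Q2). ?m (rst Q1 x, rst Q2 x) = x"
      using merge_rst by auto
    show "?m ` (cfgs Q1 \<times> cfgs Q2) \<subseteq> cfgs (Q1 \<union> Q2)"
      using merge_cfgs by auto
    show "(\<lambda>x. (rst Q1 x, rst Q2 x)) ` cfgs (Q1 \<union> Q2) \<subseteq> cfgs Q1 \<times> cfgs Q2"
      by auto
  qed
  have "(\<Sum>z\<in>cfgs (Q1 \<union> Q2). f z) = (\<Sum>p\<in>cfgs Q1 \<times> cfgs Q2. f (?m p))"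
    using sum.reindex_bij_betw[OF bij, of f] by simp
  also have "\<dots> = (\<Sum>a\<in>cfgs Q1. \<Sum>b\<in>cfgs Q2. f (merge a b))"
    by (simp add: sum.cartesian_product case_prod_beta)
  finally show ?thesis .
qed

lemma tens_apply: "tens Q1 Q2 A B x y = (if x \<in> cfgs (Q1 \<union> Q2) \<and> y \<in> cfgs (Q1 \<union> Q2)
   then A (rst Q1 x) (rst Q1 y) * B (rst Q2 x) (rst Q2 y) else 0)"
  by (simp add: tens_def restr_def)

lemma isop_tens[simp]: "isop (Q1 \<union> Q2) (Q1 \<union> Q2) (tens Q1 Q2 A B)"
  by (simp add: tens_def)

lemma tens_mmul:
  assumes "finite Q1" "finite Q2" "Q1 \<inter> Q2 = {}"
  shows "mmul (Q1 \<union> Q2) (tens Q1 Q2 A B) (tens Q1 Q2 C D) = tens Q1 Q2 (mmul Q1 A C) (mmul Q2 B D)"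
proof (rule ext, rule ext)
  fix x y
  show "mmul (Q1 \<union> Q2) (tens Q1 Q2 A B) (tens Q1 Q2 C D) x y = tens Q1 Q2 (mmul Q1 A C) (mmul Q2 B D) x y"
  proof (cases "x \<in> cfgs (Q1 \<union> Q2) \<and> y \<in> cfgs (Q1 \<union> Q2)")
    case True
    have "mmul (Q1 \<union> Q2) (tens Q1 Q2 A B) (tens Q1 Q2 C D) x y =
       (\<Sum>z\<in>cfgs (Q1 \<union> Q2). A (rst Q1 x) (rst Q1 z) * B (rst Q2 x) (rst Q2 z) * (C (rst Q1 z) (rst Q1 y) * D (rst Q2 z) (rst Q2 y)))"
      unfolding mmul_def by (rule sum.cong) (auto simp: tens_apply True)
    also have "\<dots> = (\<Sum>a\<in>cfgs Q1. \<Sum>b\<in>cfgs Q2. A (rst Q1 x) a * B (rst Q2 x) b * (C a (rst Q1 y) * D b (rst Q2 y)))"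
      by (subst sum_split[OF assms]) (intro sum.cong refl, simp add: rst_merge1 rst_merge2 assms)
    also have "\<dots> = (\<Sum>a\<in>cfgs Q1. A (rst Q1 x) a * C a (rst Q1 y)) * (\<Sum>b\<in>cfgs Q2. B (rst Q2 x) b * D b (rst Q2 y))"
      by (simp add: sum_product algebra_simps)
    finally show ?thesis using True by (simp add: tens_apply mmul_def)
  next
    case False
    then show ?thesis by (auto simp: tens_apply mmul_def)
  qed
qed

lemma tens_adj: "adj (tens Q1 Q2 A B) = tens Q1 Q2 (adj A) (adj B)"
  by (rule ext, rule ext) (auto simp: tens_apply adj_def)

lemma tens_scal: "tens Q1 Q2 (scal c A) B = scal c (tens Q1 Q2 A B)"
  by (rule ext, rule ext) (auto simp: tens_apply scal_def)

lemma tens_scal2: "tens Q1 Q2 A (scal c B) = scal c (tens Q1 Q2 A B)"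
  by (rule ext, rule ext) (auto simp: tens_apply scal_def)

lemma tens_comm: "tens Q1 Q2 A B = tens Q2 Q1 B A"
  by (rule ext, rule ext) (auto simp: tens_apply Un_commute)

lemma rst_eq_iff: "x \<in> cfgs (Q1 \<union> Q2) \<Longrightarrow> y \<in> cfgs (Q1 \<union> Q2) \<Longrightarrow>
   (rst Q1 x = rst Q1 y \<and> rst Q2 x = rst Q2 y) = (x = y)"
proof
  assume xy: "x \<in> cfgs (Q1 \<union> Q2)" "y \<in> cfgs (Q1 \<union> Q2)" "rst Q1 x = rst Q1 y \<and> rst Q2 x = rst Q2 y"
  have "x = merge (rst Q1 x) (rst Q2 x)" using merge_rst[OF xy(1)] by simp
  also have "\<dots> = merge (rst Q1 y) (rst Q2 y)" using xy(3) by simp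
  also have "\<dots> = y" using merge_rst[OF xy(2)] .
  finally show "x = y" .
qed simp

lemma tens_ident: "tens Q1 Q2 (ident Q1) (ident Q2) = ident (Q1 \<union> Q2)"
proof (rule ext, rule ext)
  fix x y
  show "tens Q1 Q2 (ident Q1) (ident Q2) x y = ident (Q1 \<union> Q2) x y"
  proof (cases "x \<in> cfgs (Q1 \<union> Q2) \<and> y \<in> cfgs (Q1 \<union> Q2)")
    case True
    then have "(rst Q1 x = rst Q1 y \<and> rst Q2 x = rst Q2 y) = (x = y)" using rst_eq_iff by blast
    then show ?thesis using True by (auto simp: tens_apply ident_apply)
  next
    case False
    then show ?thesis by (auto simp: tens_apply ident_apply)
  qed
qed

definition prodop :: "nat set \<Rightarrow> (nat \<Rightarrow> bool \<Rightarrow> bool \<Rightarrow> complex) \<Rightarrow> qop" where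
  "prodop Q f = restr Q Q (\<lambda>x y. \<Prod>q\<in>Q. f q (x q) (y q))"

definition m2 :: "(bool \<Rightarrow> bool \<Rightarrow> complex) \<Rightarrow> (bool \<Rightarrow> bool \<Rightarrow> complex) \<Rightarrow> bool \<Rightarrow> bool \<Rightarrow> complex" where
  "m2 f g a b = f a True * g True b + f a False * g False b"
definition adj2 :: "(bool \<Rightarrow> bool \<Rightarrow> complex) \<Rightarrow> bool \<Rightarrow> bool \<Rightarrow> complex" where
  "adj2 f a b = cnj (f b a)"
definition id2 :: "bool \<Rightarrow> bool \<Rightarrow> complex" where
  "id2 a b = (if a = b then 1 else 0)"

lemma isop_prodop[simp]: "isop Q Q (prodop Q f)" by (simp add: prodop_def)

lemma prodop_apply: "prodop Q f x y = (if x \<in> cfgs Q \<and> y \<in> cfgs Q then \<Prod>q\<in>Q. f q (x q) (y q) else 0)"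
  by (simp add: prodop_def restr_def)

lemma cfgs_single: "cfgs {a} = {\<lambda>_. False, (\<lambda>_. False)(a := True)}"
  by (auto simp: cfgs_def fun_eq_iff) 

lemma sum_prod_cfgs:
  fixes h :: "nat \<Rightarrow> bool \<Rightarrow> complex"
  assumes "finite Q"
  shows "(\<Sum>x\<in>cfgs Q. \<Prod>q\<in>Q. h q (x q)) = (\<Prod>q\<in>Q. h q True + h q False)"
  using assms
proof (induction Q rule: finite_induct)
  case empty
  then show ?case by (simp add: cfgs_empty)
next
  case (insert a Q)
  have d: "{a} \<inter> Q = {}" using insert by auto
  have "(\<Sum>x\<in>cfgs (insert a Q). \<Prod>q\<in>insert a Q. h q (x q)) =
        (\<Sum>x\<in>cfgs ({a} \<union> Q). \<Prod>q\<in>insert a Q. h q (x q))" by simp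
  also have "\<dots> = (\<Sum>c\<in>cfgs {a}. \<Sum>b\<in>cfgs Q. \<Prod>q\<in>insert a Q. h q (merge c b q))"
    by (rule sum_split) (use insert d in auto)
  also have "\<dots> = (\<Sum>c\<in>cfgs {a}. \<Sum>b\<in>cfgs Q. h a (c a) * (\<Prod>q\<in>Q. h q (b q)))"
  proof (intro sum.cong refl)
    fix c b assume c: "c \<in> cfgs {a}" and b: "b \<in> cfgs Q"
    have ba: "\<not> b a" using b insert(2) by (auto simp: cfgs_def)
    have "(\<Prod>q\<in>insert a Q. h q (merge c b q)) = h a (merge c b a) * (\<Prod>q\<in>Q. h q (merge c b q))"
      using insert by simp
    also have "(\<Prod>q\<in>Q. h q (merge c b q)) = (\<Prod>q\<in>Q. h q (b q))"
      using c insert(2) by (intro prod.cong refl) (auto simp: merge_def cfgs_def)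
    finally show "(\<Prod>q\<in>insert a Q. h q (merge c b q)) = h a (c a) * (\<Prod>q\<in>Q. h q (b q))"
      using ba by (simp add: merge_def)
  qed
  also have "\<dots> = (\<Sum>c\<in>cfgs {a}. h a (c a)) * (\<Sum>b\<in>cfgs Q. \<Prod>q\<in>Q. h q (b q))"
    by (rule sum_product[symmetric])
  also have "(\<Sum>c\<in>cfgs {a}. h a (c a)) = h a True + h a False"
  proof -
    have ne: "(\<lambda>_. False) \<noteq> (\<lambda>_::nat. False)(a := True)" by (auto simp: fun_eq_iff)
    show ?thesis unfolding cfgs_single using ne by (simp add: add.commute)
  qed
  finally show ?case using insert by simp
qed

lemma prodop_mmul:
  assumes "finite Q"
  shows "mmul Q (prodop Q f) (prodop Q g) = prodop Q (\<lambda>q. m2 (f q) (g q))"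
proof (rule ext, rule ext)
  fix x y
  show "mmul Q (prodop Q f) (prodop Q g) x y = prodop Q (\<lambda>q. m2 (f q) (g q)) x y"
  proof (cases "x \<in> cfgs Q \<and> y \<in> cfgs Q")
    case True
    have "mmul Q (prodop Q f) (prodop Q g) x y = (\<Sum>z\<in>cfgs Q. \<Prod>q\<in>Q. f q (x q) (z q) * g q (z q) (y q))"
      unfolding mmul_def by (rule sum.cong) (auto simp: prodop_apply True prod.distrib)
    also have "\<dots> = (\<Prod>q\<in>Q. m2 (f q) (g q) (x q) (y q))"
      by (subst sum_prod_cfgs[OF assms]) (simp add: m2_def)
    finally show ?thesis using True by (simp add: prodop_apply)
  next
    case False
    then show ?thesis by (auto simp: prodop_apply mmul_def)
  qed
qed

lemma adj_prodop: "adj (prodop Q f) = prodop Q (\<lambda>q. adj2 (f q))"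
  by (rule ext, rule ext) (auto simp: prodop_apply adj_def adj2_def)

lemma prodop_cong: "(\<And>q. q \<in> Q \<Longrightarrow> f q = g q) \<Longrightarrow> prodop Q f = prodop Q g"
  unfolding prodop_def by (simp cong: prod.cong)

lemma prodop_ident: 
  assumes "finite Q" "\<And>q. q \<in> Q \<Longrightarrow> f q = id2"
  shows "prodop Q f = ident Q"
proof (rule ext, rule ext)
  fix x y
  show "prodop Q f x y = ident Q x y"
  proof (cases "x \<in> cfgs Q \<and> y \<in> cfgs Q")
    case True
    have "(\<Prod>q\<in>Q. f q (x q) (y q)) = (\<Prod>q\<in>Q. id2 (x q) (y q))" using assms by simp
    also have "\<dots> = (if x = y then 1 else 0)"
    proof (cases "x = y")
      case True then show ?thesis by (simp add: id2_def)
    next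
      case False
      then obtain q where q: "x q \<noteq> y q" by auto
      then have "q \<in> Q" using True by (auto simp: cfgs_def)
      with q have "\<exists>q\<in>Q. id2 (x q) (y q) = 0" by (auto simp: id2_def)
      then show ?thesis using False assms(1) by (simp add: prod_zero_iff)
    qed
    finally show ?thesis using True by (auto simp: prodop_apply ident_apply)
  next
    case False
    then show ?thesis by (auto simp: prodop_apply ident_apply)
  qed
qed

lemma prodop_split:
  assumes "finite Q1" "finite Q2" "Q1 \<inter> Q2 = {}"
  shows "prodop (Q1 \<union> Q2) f = tens Q1 Q2 (prodop Q1 f) (prodop Q2 f)"
proof (rule ext, rule ext)
  fix x y
  show "prodop (Q1 \<union> Q2) f x y = tens Q1 Q2 (prodop Q1 f) (prodop Q2 f) x y"
  proof (cases "x \<in> cfgs (Q1 \<union> Q2) \<and> y \<in> cfgs (Q1 \<union> Q2)")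
    case True
    have "(\<Prod>q\<in>Q1 \<union> Q2. f q (x q) (y q)) = (\<Prod>q\<in>Q1. f q (x q) (y q)) * (\<Prod>q\<in>Q2. f q (x q) (y q))"
      using assms by (simp add: prod.union_disjoint)
    also have "(\<Prod>q\<in>Q1. f q (x q) (y q)) = (\<Prod>q\<in>Q1. f q (rst Q1 x q) (rst Q1 y q))"
      by (rule prod.cong) (auto simp: rst_def)
    also have "(\<Prod>q\<in>Q2. f q (x q) (y q)) = (\<Prod>q\<in>Q2. f q (rst Q2 x q) (rst Q2 y q))"
      by (rule prod.cong) (auto simp: rst_def)
    finally show ?thesis using True by (simp add: prodop_apply tens_apply)
  next
    case False
    then show ?thesis by (auto simp: prodop_apply tens_apply)
  qed
qed

definition tr :: "nat set \<Rightarrow> qop \<Rightarrow> complex" where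
  "tr Q A = (\<Sum>x\<in>cfgs Q. A x x)"

lemma tr_prodop:
  assumes "finite Q"
  shows "tr Q (prodop Q f) = (\<Prod>q\<in>Q. f q True True + f q False False)"
proof -
  have "tr Q (prodop Q f) = (\<Sum>x\<in>cfgs Q. \<Prod>q\<in>Q. f q (x q) (x q))"
    unfolding tr_def by (rule sum.cong) (auto simp: prodop_apply)
  also have "\<dots> = (\<Prod>q\<in>Q. f q True True + f q False False)"
    by (rule sum_prod_cfgs[OF assms])
  finally show ?thesis .
qed

lemma scal_prodop_apply: "scal c (prodop Q f) x y = c * prodop Q f x y" by (simp add: scal_def)


lemma m2_assoc: "m2 (m2 f g) h = m2 f (m2 g h)"
  by (simp add: m2_def fun_eq_iff algebra_simps)
lemma m2_id_left[simp]: "m2 id2 f = f"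
  by (simp add: m2_def id2_def fun_eq_iff)
lemma m2_id_right[simp]: "m2 f id2 = f"
  by (simp add: m2_def id2_def fun_eq_iff)
lemma adj2_m2: "adj2 (m2 f g) = m2 (adj2 g) (adj2 f)"
  by (simp add: m2_def adj2_def fun_eq_iff mult.commute)
lemma adj2_adj2[simp]: "adj2 (adj2 f) = f" by (simp add: adj2_def fun_eq_iff)
lemma adj2_id[simp]: "adj2 id2 = id2" by (simp add: adj2_def id2_def fun_eq_iff)

definition unit2 :: "(bool \<Rightarrow> bool \<Rightarrow> complex) \<Rightarrow> bool" where
  "unit2 u \<longleftrightarrow> m2 u (adj2 u) = id2 \<and> m2 (adj2 u) u = id2"

lemma unitary1_unit2: "unitary1 u \<Longrightarrow> unit2 u"
  unfolding unitary1_def unit2_def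
  by (auto simp: fun_eq_iff m2_def adj2_def id2_def UNIV_bool add.commute)

lemma unit2_m2: "unit2 a \<Longrightarrow> unit2 b \<Longrightarrow> unit2 (m2 a b)"
  unfolding unit2_def adj2_m2
  by (metis m2_assoc m2_id_left)

lemma unit2_adj2: "unit2 a \<Longrightarrow> unit2 (adj2 a)"
  unfolding unit2_def by simp

lemma unit2_id2[simp]: "unit2 id2" unfolding unit2_def by simp

definition comm2 where "comm2 a b = m2 (m2 (m2 a b) (adj2 a)) (adj2 b)"

lemma unit2_comm2: "unit2 a \<Longrightarrow> unit2 b \<Longrightarrow> unit2 (comm2 a b)"
  unfolding comm2_def by (intro unit2_m2 unit2_adj2)

lemma comm2_id_right: "unit2 a \<Longrightarrow> comm2 a id2 = id2"
  unfolding comm2_def unit2_def by simp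
lemma comm2_id_left: "unit2 b \<Longrightarrow> comm2 id2 b = id2"
  unfolding comm2_def unit2_def by simp

lemma sigma_cases: "sigma k = sigma 0 \<or> sigma k = sigma 1 \<or> sigma k = sigma 2 \<or> sigma k = sigma 3"
  by (auto simp: sigma_def fun_eq_iff)

lemma sigma0: "sigma 0 = id2" by (simp add: sigma_def id2_def fun_eq_iff)

lemma sigma_herm_aux: "k \<in> {0,1,2,3::nat} \<Longrightarrow> adj2 (sigma k) = sigma k"
  by (auto simp: sigma_def adj2_def fun_eq_iff)
lemma sigma_herm[simp]: "adj2 (sigma k) = sigma k"
  using sigma_cases[of k] sigma_herm_aux by (metis insertCI)

lemma sigma_sq_aux: "k \<in> {0,1,2,3::nat} \<Longrightarrow> m2 (sigma k) (sigma k) = id2"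
  by (auto simp: sigma_def m2_def id2_def fun_eq_iff)
lemma sigma_sq[simp]: "m2 (sigma k) (sigma k) = id2"
  using sigma_cases[of k] sigma_sq_aux by (metis insertCI)

lemma unit2_sigma[simp]: "unit2 (sigma k)" unfolding unit2_def by simp

lemma sigma_comm_aux: "i \<in> {0,1,2,3::nat} \<Longrightarrow> j \<in> {0,1,2,3::nat} \<Longrightarrow>
   m2 (sigma i) (sigma j) = m2 (sigma j) (sigma i) \<or> m2 (sigma i) (sigma j) = (\<lambda>a b. - m2 (sigma j) (sigma i) a b)"
  by (auto simp: sigma_def m2_def fun_eq_iff)

lemma sigma_comm: "m2 (sigma i) (sigma j) = m2 (sigma j) (sigma i) \<or> m2 (sigma i) (sigma j) = (\<lambda>a b. - m2 (sigma j) (sigma i) a b)"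
proof -
  obtain i' where i': "i' \<in> {0,1,2,3::nat}" "sigma i = sigma i'" using sigma_cases[of i] by blast
  obtain j' where j': "j' \<in> {0,1,2,3::nat}" "sigma j = sigma j'" using sigma_cases[of j] by blast
  show ?thesis using sigma_comm_aux[OF i'(1) j'(1)] i'(2) j'(2) by simp
qed

lemma sigma_trace: "i < 4 \<Longrightarrow> j < 4 \<Longrightarrow>
   m2 (adj2 (sigma i)) (sigma j) True True + m2 (adj2 (sigma i)) (sigma j) False False = (if i = j then 2 else 0)"
proof -
  assume "i < 4" "j < 4"
  then have "i \<in> {0,1,2,3}" "j \<in> {0,1,2,3}" by auto
  then show ?thesis by (auto simp: sigma_def m2_def)
qed

definition pidx :: "bool \<Rightarrow> bool \<Rightarrow> nat" where
  "pidx a b = (if a then (if b then 2 else 1) else (if b then 3 else 0))"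

lemma pidx_lt[simp]: "pidx a b < 4" by (simp add: pidx_def)
lemma pidx_FF[simp]: "pidx False False = 0" by (simp add: pidx_def)

lemma sigma_complete:
  "(\<Sum>al\<in>UNIV. \<Sum>be\<in>UNIV. cnj (sigma (pidx al be) a b) * sigma (pidx al be) c d) =
   (if a = c \<and> b = d then 2 else 0)"
  by (cases a; cases b; cases c; cases d) (simp_all add: UNIV_bool sigma_def pidx_def)


definition e0 :: cfg where "e0 = (\<lambda>_. False)"
lemma e0_cfgs[simp]: "e0 \<in> cfgs Q" by (simp add: e0_def cfgs_def)

lemma tens_at_merge:
  assumes "x \<in> cfgs Q1" "y \<in> cfgs Q1" "u \<in> cfgs Q2" "v \<in> cfgs Q2" "Q1 \<inter> Q2 = {}"
  shows "tens Q1 Q2 A B (merge x u) (merge y v) = A x y * B u v"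
  using assms by (simp add: tens_apply merge_cfgs rst_merge1 rst_merge2)

lemma ident_at: "x \<in> cfgs Q \<Longrightarrow> y \<in> cfgs Q \<Longrightarrow> ident Q x y = (if x = y then 1 else 0)"
  by (auto simp: ident_apply)

lemma tens_ident_inv:
  assumes "finite Q1" "finite Q2" "Q1 \<inter> Q2 = {}" "isop Q1 Q1 A" "isop Q2 Q2 B"
    and "tens Q1 Q2 A B = ident (Q1 \<union> Q2)"
  shows "\<exists>\<mu>. \<mu> \<noteq> 0 \<and> A = scal \<mu> (ident Q1) \<and> B = scal (1/\<mu>) (ident Q2)"
proof -
  have key: "A x y * B u v = (if x = y \<and> u = v then 1 else 0)"
    if "x \<in> cfgs Q1" "y \<in> cfgs Q1" "u \<in> cfgs Q2" "v \<in> cfgs Q2" for x y u v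
  proof -
    have "A x y * B u v = tens Q1 Q2 A B (merge x u) (merge y v)"
      using tens_at_merge[OF that assms(3)] by simp
    also have "\<dots> = ident (Q1 \<union> Q2) (merge x u) (merge y v)" using assms(6) by simp
    also have "\<dots> = (if merge x u = merge y v then 1 else 0)"
      using that by (simp add: ident_at merge_cfgs)
    also have "(merge x u = merge y v) = (x = y \<and> u = v)"
    proof
      assume "merge x u = merge y v"
      then have "rst Q1 (merge x u) = rst Q1 (merge y v)" "rst Q2 (merge x u) = rst Q2 (merge y v)" by simp_all
      then show "x = y \<and> u = v" using that rst_merge1[OF _ _ assms(3)] rst_merge2[OF _ _ assms(3)] by simp
    qed simp
    finally show ?thesis .
  qed
  have k0: "A e0 e0 * B e0 e0 = 1" using key[of e0 e0 e0 e0] by simp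
  have Bee: "B e0 e0 \<noteq> 0" using k0 by (metis mult_zero_right zero_neq_one)
  have Aee: "A e0 e0 \<noteq> 0" using k0 by (metis mult_zero_left zero_neq_one)
  define \<mu> where "\<mu> = A e0 e0"
  have "A x y = scal \<mu> (ident Q1) x y" if "x \<in> cfgs Q1" "y \<in> cfgs Q1" for x y
  proof -
    have a: "A x y * B e0 e0 = (if x = y then 1 else 0)" using key[of x y e0 e0] that by simp
    have b: "A e0 e0 * B e0 e0 = 1" using key[of e0 e0 e0 e0] by simp
    have "A x y = (if x = y then 1 else 0) / B e0 e0" using a Bee by (simp add: field_simps)
    moreover have "A e0 e0 = 1 / B e0 e0" using b Bee by (simp add: field_simps)
    ultimately show ?thesis using that unfolding \<mu>_def scal_def by (simp add: ident_at)
  qed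
  then have A: "A = scal \<mu> (ident Q1)"
    by (rule isop_eqI[OF assms(4) isop_scal[OF isop_ident]]) auto
  have "B u v = scal (1/\<mu>) (ident Q2) u v" if "u \<in> cfgs Q2" "v \<in> cfgs Q2" for u v
  proof -
    have a: "A e0 e0 * B u v = (if u = v then 1 else 0)" using key[of e0 e0 u v] that by simp
    then show ?thesis using Aee that unfolding \<mu>_def scal_def
      by (simp add: ident_at field_simps)
  qed
  then have B: "B = scal (1/\<mu>) (ident Q2)"
    by (rule isop_eqI[OF assms(5) isop_scal[OF isop_ident]]) auto
  have "\<mu> \<noteq> 0" using Aee by (simp add: \<mu>_def)
  with A B show ?thesis by (intro exI[of _ \<mu>]) simp
qed

definition eunit :: "nat set \<Rightarrow> cfg \<Rightarrow> cfg \<Rightarrow> qop" where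
  "eunit Q a b = restr Q Q (\<lambda>x y. if x = a \<and> y = b then 1 else 0)"

lemma isop_eunit[simp]: "isop Q Q (eunit Q a b)" by (simp add: eunit_def)

lemma mmul_eunit_right: "finite Q \<Longrightarrow> b \<in> cfgs Q \<Longrightarrow> a \<in> cfgs Q \<Longrightarrow> y \<in> cfgs Q \<Longrightarrow>
   mmul Q X (eunit Q a b) x y = (if y = b then X x a else 0)"
  unfolding mmul_def eunit_def restr_def
  by (simp add: if_distrib[of "\<lambda>t. X x _ * t"] sum.delta' cong: if_cong)

lemma mmul_eunit_left: "finite Q \<Longrightarrow> b \<in> cfgs Q \<Longrightarrow> a \<in> cfgs Q \<Longrightarrow> x \<in> cfgs Q \<Longrightarrow>
   mmul Q (eunit Q a b) X x y = (if x = a then X b y else 0)"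
  unfolding mmul_def eunit_def restr_def
  by (simp add: if_distrib[of "\<lambda>t. t * X _ y"] sum.delta cong: if_cong)

lemma commutant_scalar:
  assumes "finite Q1" "finite Q2" "Q1 \<inter> Q2 = {}" "isop Q1 Q1 X"
    and comm: "\<And>AL. isop Q1 Q1 AL \<Longrightarrow>
      mmul (Q1 \<union> Q2) (tens Q1 Q2 X (ident Q2)) (tens Q1 Q2 AL (ident Q2)) =
      mmul (Q1 \<union> Q2) (tens Q1 Q2 AL (ident Q2)) (tens Q1 Q2 X (ident Q2))"
  shows "\<exists>c. X = scal c (ident Q1)"
proof -
  have c1: "mmul Q1 X AL = mmul Q1 AL X" if "isop Q1 Q1 AL" for AL
  proof (rule isop_eqI[OF isop_mmul isop_mmul])
    show "isop Q1 Q1 X" "isop Q1 Q1 AL" "isop Q1 Q1 AL" "isop Q1 Q1 X" using assms(4) that by auto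
    fix x y assume xy: "x \<in> cfgs Q1" "y \<in> cfgs Q1"
    have "tens Q1 Q2 (mmul Q1 X AL) (mmul Q2 (ident Q2) (ident Q2)) =
          tens Q1 Q2 (mmul Q1 AL X) (mmul Q2 (ident Q2) (ident Q2))"
      using comm[OF that] by (simp add: tens_mmul assms(1-3))
    then have "tens Q1 Q2 (mmul Q1 X AL) (ident Q2) = tens Q1 Q2 (mmul Q1 AL X) (ident Q2)"
      by (simp add: mmul_ident_left[OF assms(2) isop_ident])
    then have "tens Q1 Q2 (mmul Q1 X AL) (ident Q2) (merge x e0) (merge y e0) =
          tens Q1 Q2 (mmul Q1 AL X) (ident Q2) (merge x e0) (merge y e0)"
      by simp
    then show "mmul Q1 X AL x y = mmul Q1 AL X x y"
      using xy tens_at_merge[OF xy e0_cfgs e0_cfgs assms(3)] by (simp add: ident_at)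
  qed
  have X: "X x a = (if x = a then X e0 e0 else 0)" if "x \<in> cfgs Q1" "a \<in> cfgs Q1" for x a
  proof -
    have "mmul Q1 X (eunit Q1 a e0) x e0 = mmul Q1 (eunit Q1 a e0) X x e0"
      using c1[of "eunit Q1 a e0"] by simp
    moreover have "mmul Q1 X (eunit Q1 a e0) x e0 = X x a"
      using mmul_eunit_right[OF assms(1) e0_cfgs that(2) e0_cfgs] by simp
    moreover have "mmul Q1 (eunit Q1 a e0) X x e0 = (if x = a then X e0 e0 else 0)"
      using mmul_eunit_left[OF assms(1) e0_cfgs that(2) that(1)] by simp
    ultimately have 1: "X x a = (if x = a then X e0 e0 else 0)" by simp
    show ?thesis using 1 .
  qed
  have "X = scal (X e0 e0) (ident Q1)"
  proof (rule isop_eqI[OF assms(4) isop_scal[OF isop_ident]])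
    fix x y assume xy: "x \<in> cfgs Q1" "y \<in> cfgs Q1"
    have h: "X x y = (if x = y then X e0 e0 else 0)" by (rule X[OF xy])
    show "X x y = scal (X e0 e0) (ident Q1) x y"
      unfolding h scal_def ident_at[OF xy] by simp
  qed
  then show ?thesis by blast
qed


lemma restr_scal_prod: "restr Q Q (\<lambda>x y. c * (\<Prod>q\<in>Q. f q (x q) (y q))) = scal c (prodop Q f)"
  by (rule ext, rule ext) (simp add: restr_def scal_def prodop_def)

lemma pauli_opsI: "c \<in> {1, -1, \<i>, - \<i>} \<Longrightarrow> (\<forall>q. k q < 4) \<Longrightarrow> scal c (prodop Q (\<lambda>q. sigma (k q))) \<in> pauli_ops Q"
  unfolding pauli_ops_def by (subst restr_scal_prod[symmetric]) blast

lemma pauli_opsE: "P \<in> pauli_ops Q \<Longrightarrow> (\<And>c k. c \<in> {1, -1, \<i>, - \<i>} \<Longrightarrow> (\<forall>q. k q < 4) \<Longrightarrow> P = scal c (prodop Q (\<lambda>q. sigma (k q))) \<Longrightarrow> thesis) \<Longrightarrow> thesis"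
proof -
  assume P: "P \<in> pauli_ops Q" and h: "(\<And>c k. c \<in> {1, -1, \<i>, - \<i>} \<Longrightarrow> (\<forall>q. k q < 4) \<Longrightarrow> P = scal c (prodop Q (\<lambda>q. sigma (k q))) \<Longrightarrow> thesis)"
  from P obtain c k where "P = restr Q Q (\<lambda>x y. c * (\<Prod>q\<in>Q. sigma (k q) (x q) (y q)))" "c \<in> {1, -1, \<i>, - \<i>}" "\<forall>q. k q < 4"
    unfolding pauli_ops_def by blast
  then show thesis using h[of c k] restr_scal_prod[where c=c and Q=Q and f="\<lambda>q. sigma (k q)"] by simp
qed

lemma prod_if_zero: "finite S \<Longrightarrow> (\<Prod>r\<in>S. if P r then c r else (0::complex)) = (if \<forall>r\<in>S. P r then \<Prod>r\<in>S. c r else 0)"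
  by (induction S rule: finite_induct) auto

definition sgn :: "bool \<Rightarrow> complex" where "sgn b = (if b then -1 else 1)"
definition flip :: "nat \<Rightarrow> cfg \<Rightarrow> cfg" where "flip q x = x(q := \<not> x q)"

lemma flip_flip[simp]: "flip q (flip q x) = x" by (simp add: flip_def fun_eq_iff)
lemma flip_cfgs[simp]: "q \<in> S \<Longrightarrow> (flip q x \<in> cfgs S) = (x \<in> cfgs S)"
  by (auto simp: flip_def cfgs_def split: if_splits)

definition Zop :: "nat set \<Rightarrow> nat \<Rightarrow> qop" where "Zop S q = prodop S (\<lambda>r. sigma (if r = q then 3 else 0))"
definition Xop :: "nat set \<Rightarrow> nat \<Rightarrow> qop" where "Xop S q = prodop S (\<lambda>r. sigma (if r = q then 1 else 0))"

lemma cfgs_eq_iff: "z \<in> cfgs S \<Longrightarrow> y \<in> cfgs S \<Longrightarrow> (\<forall>r\<in>S. z r = y r) = (z = y)"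
  by (auto simp: cfgs_def fun_eq_iff)

lemma Zop_apply: assumes "finite S" "q \<in> S" "z \<in> cfgs S" "y \<in> cfgs S"
  shows "Zop S q z y = (if z = y then sgn (y q) else 0)"
proof -
  have "Zop S q z y = (\<Prod>r\<in>S. if z r = y r then (if r = q then sgn (y r) else 1) else 0)"
    unfolding Zop_def prodop_apply using assms(3,4)
    by (simp, intro prod.cong refl) (auto simp: sigma_def sgn_def)
  also have "\<dots> = (if \<forall>r\<in>S. z r = y r then \<Prod>r\<in>S. (if r = q then sgn (y r) else 1) else 0)"
    by (rule prod_if_zero[OF assms(1)])
  also have "\<dots> = (if z = y then sgn (y q) else 0)"
    using assms by (simp add: cfgs_eq_iff prod.delta)
  finally show ?thesis .
qed

lemma Xop_apply: assumes "finite S" "q \<in> S" "z \<in> cfgs S" "y \<in> cfgs S"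
  shows "Xop S q z y = (if z = flip q y then 1 else 0)"
proof -
  have "Xop S q z y = (\<Prod>r\<in>S. if (if r = q then z r \<noteq> y r else z r = y r) then 1 else 0)"
    unfolding Xop_def prodop_apply using assms(3,4)
    by (simp, intro prod.cong refl) (auto simp: sigma_def)
  also have "\<dots> = (if \<forall>r\<in>S. (if r = q then z r \<noteq> y r else z r = y r) then \<Prod>r\<in>S. 1 else 0)"
    by (rule prod_if_zero[OF assms(1)])
  also have "(\<forall>r\<in>S. (if r = q then z r \<noteq> y r else z r = y r)) = (\<forall>r\<in>S. z r = flip q y r)"
    by (auto simp: flip_def)
  also have "\<dots> = (z = flip q y)" using assms by (simp add: cfgs_eq_iff)
  finally show ?thesis by simp
qed

lemma MZ_right: assumes "finite S" "q \<in> S" "y \<in> cfgs S"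
  shows "mmul S M (Zop S q) x y = M x y * sgn (y q)"
proof -
  have "mmul S M (Zop S q) x y = (\<Sum>z\<in>cfgs S. if z = y then M x y * sgn (y q) else 0)"
    unfolding mmul_def by (rule sum.cong) (auto simp: Zop_apply assms)
  also have "\<dots> = M x y * sgn (y q)" using assms by (simp add: sum.delta')
  finally show ?thesis .
qed

lemma MZ_left: assumes "finite S" "q \<in> S" "x \<in> cfgs S"
  shows "mmul S (Zop S q) M x y = sgn (x q) * M x y"
proof -
  have "mmul S (Zop S q) M x y = (\<Sum>z\<in>cfgs S. if z = x then sgn (x q) * M x y else 0)"
    unfolding mmul_def by (rule sum.cong) (auto simp: Zop_apply assms)
  also have "\<dots> = sgn (x q) * M x y" using assms by (simp add: sum.delta')
  finally show ?thesis .
qed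

lemma MX_right: assumes "finite S" "q \<in> S" "y \<in> cfgs S"
  shows "mmul S M (Xop S q) x y = M x (flip q y)"
proof -
  have "mmul S M (Xop S q) x y = (\<Sum>z\<in>cfgs S. if z = flip q y then M x (flip q y) else 0)"
    unfolding mmul_def by (rule sum.cong) (auto simp: Xop_apply assms)
  also have "\<dots> = M x (flip q y)" using assms by (simp add: sum.delta')
  finally show ?thesis .
qed

lemma MX_left: assumes "finite S" "q \<in> S" "x \<in> cfgs S"
  shows "mmul S (Xop S q) M x y = M (flip q x) y"
proof -
  have "mmul S (Xop S q) M x y = (\<Sum>z\<in>cfgs S. if z = flip q x then M (flip q x) y else 0)"
    unfolding mmul_def
  proof (rule sum.cong)
    fix z assume z: "z \<in> cfgs S"
    have "Xop S q x z = (if x = flip q z then 1 else 0)" using Xop_apply assms z by blast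
    moreover have "(x = flip q z) = (z = flip q x)" by (auto simp: flip_def fun_eq_iff)
    ultimately show "Xop S q x z * M z y = (if z = flip q x then M (flip q x) y else 0)" by auto
  qed simp
  also have "\<dots> = M (flip q x) y" using assms by (simp add: sum.delta')
  finally show ?thesis .
qed


lemma sgn_bool_aux: "sgn y0 = al * sgn x0 \<Longrightarrow> sgn y = al * sgn x \<Longrightarrow> y = (x \<noteq> (x0 \<noteq> y0))"
  by (cases x0; cases y0; cases x; cases y) (auto simp: sgn_def)

lemma pauli_char:
  fixes M :: qop
  assumes fin: "finite S" and M: "isop S S M"
    and hz: "\<forall>q\<in>S. \<exists>al. \<forall>x\<in>cfgs S. \<forall>y\<in>cfgs S. M x y * sgn (y q) = al * (sgn (x q) * M x y)"
    and hx: "\<forall>q\<in>S. \<exists>be. \<forall>x\<in>cfgs S. \<forall>y\<in>cfgs S. M x (flip q y) = be * M (flip q x) y"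
  shows "\<exists>c P. P \<in> pauli_ops S \<and> M = scal c P"
proof (cases "\<forall>x y. M x y = 0")
  case True
  have "scal 1 (prodop S (\<lambda>q. sigma 0)) \<in> pauli_ops S" by (rule pauli_opsI) auto
  moreover have "M = scal 0 (scal 1 (prodop S (\<lambda>q. sigma 0)))"
    using True by (simp add: scal_def fun_eq_iff)
  ultimately show ?thesis by blast
next
  case False
  then obtain x0 y0 where m0: "M x0 y0 \<noteq> 0" by blast
  have x0: "x0 \<in> cfgs S" and y0: "y0 \<in> cfgs S" using m0 isopD[OF M] by blast+
  from bchoice[OF hx] obtain be where be: "\<And>q x y. q \<in> S \<Longrightarrow> x \<in> cfgs S \<Longrightarrow> y \<in> cfgs S \<Longrightarrow>
      M x (flip q y) = be q * M (flip q x) y" by blast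
  define b where "b q = (x0 q \<noteq> y0 q)" for q
  define xb where "xb x = (\<lambda>q. x q \<noteq> b q)" for x
  have b_out: "q \<notin> S \<Longrightarrow> \<not> b q" for q using x0 y0 by (auto simp: b_def cfgs_def)
  have xb_cfgs: "x \<in> cfgs S \<Longrightarrow> xb x \<in> cfgs S" for x using b_out by (auto simp: xb_def cfgs_def)
  have xb0: "xb x0 = y0" by (auto simp: xb_def b_def fun_eq_iff)
  have i: "y = xb x" if xy: "x \<in> cfgs S" "y \<in> cfgs S" and ne: "M x y \<noteq> 0" for x y
  proof
    fix q show "y q = xb x q"
    proof (cases "q \<in> S")
      case True
      then obtain al where al: "\<forall>x\<in>cfgs S. \<forall>y\<in>cfgs S. M x y * sgn (y q) = al * (sgn (x q) * M x y)"
        using hz by blast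
      have "M x0 y0 * sgn (y0 q) = M x0 y0 * (al * sgn (x0 q))" using al x0 y0 by (simp add: algebra_simps)
      then have 1: "sgn (y0 q) = al * sgn (x0 q)" using m0 by simp
      have "M x y * sgn (y q) = M x y * (al * sgn (x q))" using al xy by (simp add: algebra_simps)
      then have 2: "sgn (y q) = al * sgn (x q)" using ne by simp
      show ?thesis using sgn_bool_aux[OF 1 2] by (simp add: xb_def b_def)
    next
      case False
      then show ?thesis using xy b_out by (auto simp: xb_def cfgs_def)
    qed
  qed
  define d where "d x = M x (xb x)" for x
  have xb_flip: "xb (flip q x) = flip q (xb x)" for q x by (auto simp: xb_def flip_def fun_eq_iff)
  have iii: "d x = be q * d (flip q x)" if "q \<in> S" "x \<in> cfgs S" for q x
    using be[OF that(1) that(2) flip_cfgs[OF that(1), THEN iffD2, OF xb_cfgs[OF that(2)]]]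
    by (simp add: d_def xb_flip)
  have d0: "d x0 \<noteq> 0" using m0 xb0 by (simp add: d_def)
  have iv: "be q * be q = 1" if "q \<in> S" for q
  proof -
    have "d x0 = be q * d (flip q x0)" using iii that x0 by blast
    also have "d (flip q x0) = be q * d x0" using iii[of q "flip q x0"] that x0 by simp
    finally have "d x0 * 1 = d x0 * (be q * be q)" by (simp add: algebra_simps)
    then show ?thesis using d0 by (simp only: mult_cancel_left) simp
  qed
  have iii': "d (flip q x) = be q * d x" if "q \<in> S" "x \<in> cfgs S" for q x
  proof -
    have "be q * d x = be q * be q * d (flip q x)" using iii[OF that] by simp
    then show ?thesis using iv[OF that(1)] by simp
  qed
  have v: "\<forall>x\<in>cfgs T. d x = d e0 * (\<Prod>q\<in>T. if x q then be q else 1)" if "finite T" "T \<subseteq> S" for T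
    using that
  proof (induction T rule: finite_induct)
    case empty
    then show ?case by (simp add: cfgs_empty e0_def)
  next
    case (insert a T)
    show ?case
    proof
      fix x assume x: "x \<in> cfgs (insert a T)"
      define x' where "x' = x(a := False)"
      have x': "x' \<in> cfgs T" using x by (auto simp: x'_def cfgs_def)
      have x'S: "x' \<in> cfgs S" using x' insert(4) by (auto simp: cfgs_def)
      have TS: "T \<subseteq> S" using insert(4) by blast
      have IH: "d x' = d e0 * (\<Prod>q\<in>T. if x' q then be q else 1)" using bspec[OF insert.IH[OF TS] x'] .
      have pT: "(\<Prod>q\<in>T. if x' q then be q else 1) = (\<Prod>q\<in>T. if x q then be q else 1)"
        using insert(2) by (intro prod.cong refl) (auto simp: x'_def)
      have aS: "a \<in> S" using insert(4) by blast
      show "d x = d e0 * (\<Prod>q\<in>insert a T. if x q then be q else 1)"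
      proof (cases "x a")
        case True
        then have "x = flip a x'" by (auto simp: x'_def flip_def fun_eq_iff)
        then have "d x = be a * d x'" using iii'[OF aS x'S] by simp
        also have "\<dots> = be a * (d e0 * (\<Prod>q\<in>T. if x q then be q else 1))" by (simp only: IH pT)
        also have "\<dots> = d e0 * (\<Prod>q\<in>insert a T. if x q then be q else 1)"
          using True insert(1,2) by simp
        finally show ?thesis .
      next
        case False
        then have "x' = x" by (auto simp: x'_def fun_eq_iff)
        then have "d x = d x'" by simp
        also have "\<dots> = d e0 * (\<Prod>q\<in>T. if x q then be q else 1)" by (simp only: IH pT)
        also have "\<dots> = d e0 * (\<Prod>q\<in>insert a T. if x q then be q else 1)"
          using False insert(1,2) by simp
        finally show ?thesis .
      qed
    qed
  qed
  have vS: "d x = d e0 * (\<Prod>q\<in>S. if x q then be q else 1)" if "x \<in> cfgs S" for x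
    using bspec[OF v[OF fin order.refl] that] .
  have bpm: "be q = 1 \<or> be q = -1" if "q \<in> S" for q
  proof -
    have "(be q - 1) * (be q + 1) = 0" using iv[OF that] by (simp add: algebra_simps)
    then show ?thesis by (simp add: eq_neg_iff_add_eq_0)
  qed
  define k where "k q = (if b q then (if be q = 1 then 1 else 2) else (if be q = 1 then 0 else 3::nat))" for q
  define om where "om q = (if b q \<and> be q \<noteq> 1 then - \<i> else 1)" for q
  have kq: "sigma (k q) a c = (if c = (a \<noteq> b q) then om q * (if a then be q else 1) else 0)"
    if "q \<in> S" for q a c
    using bpm[OF that]
    by (cases "b q"; cases a; cases c) (auto simp: k_def om_def sigma_def)
  have k4: "\<forall>q. k q < 4" by (simp add: k_def)
  have om0: "(\<Prod>q\<in>S. om q) \<noteq> 0" using fin by (simp add: om_def)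
  define c where "c = d e0 / (\<Prod>q\<in>S. om q)"
  have P: "scal 1 (prodop S (\<lambda>q. sigma (k q))) \<in> pauli_ops S" by (rule pauli_opsI[OF _ k4]) simp
  have "M = scal c (scal 1 (prodop S (\<lambda>q. sigma (k q))))"
  proof (rule isop_eqI[OF M isop_scal[OF isop_scal[OF isop_prodop]]])
    fix x y assume xy: "x \<in> cfgs S" "y \<in> cfgs S"
    have "prodop S (\<lambda>q. sigma (k q)) x y =
       (\<Prod>q\<in>S. if y q = (x q \<noteq> b q) then om q * (if x q then be q else 1) else 0)"
      using xy by (simp add: prodop_apply kq cong: prod.cong)
    also have "\<dots> = (if \<forall>q\<in>S. y q = xb x q then \<Prod>q\<in>S. om q * (if x q then be q else 1) else 0)"
      by (subst prod_if_zero[OF fin]) (simp add: xb_def)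
    also have "\<dots> = (if y = xb x then (\<Prod>q\<in>S. om q) * (\<Prod>q\<in>S. if x q then be q else 1) else 0)"
      using cfgs_eq_iff[OF xy(2) xb_cfgs[OF xy(1)]] by (simp add: prod.distrib)
    finally have pe: "prodop S (\<lambda>q. sigma (k q)) x y =
       (if y = xb x then (\<Prod>q\<in>S. om q) * (\<Prod>q\<in>S. if x q then be q else 1) else 0)" .
    show "M x y = scal c (scal 1 (prodop S (\<lambda>q. sigma (k q)))) x y"
    proof (cases "y = xb x")
      case True
      then have "M x y = d x" by (simp add: d_def)
      also have "\<dots> = d e0 * (\<Prod>q\<in>S. if x q then be q else 1)" by (rule vS[OF xy(1)])
      finally show ?thesis using pe True om0 by (simp add: scal_def c_def)
    next
      case False
      then have "M x y = 0" using i[OF xy] by blast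
      then show ?thesis using pe False by (simp add: scal_def)
    qed
  qed
  then show ?thesis using P by blast
qed


definition lsum :: "'i set \<Rightarrow> ('i \<Rightarrow> complex) \<Rightarrow> ('i \<Rightarrow> qop) \<Rightarrow> qop" where
  "lsum I c F = (\<lambda>x y. \<Sum>i\<in>I. c i * F i x y)"

lemma mmul_lsum_right: "mmul Q A (lsum I c F) = lsum I c (\<lambda>i. mmul Q A (F i))"
  unfolding lsum_def mmul_def
  by (rule ext, rule ext) (simp add: sum_distrib_left sum_distrib_right algebra_simps sum.swap[of _ I])

lemma mmul_lsum_left: "mmul Q (lsum I c F) B = lsum I c (\<lambda>i. mmul Q (F i) B)"
  unfolding lsum_def mmul_def
  by (rule ext, rule ext) (simp add: sum_distrib_left sum_distrib_right algebra_simps sum.swap[of _ I])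

lemma tr_lsum: "tr Q (lsum I c F) = (\<Sum>i\<in>I. c i * tr Q (F i))"
  unfolding lsum_def tr_def
  by (simp add: sum_distrib_left sum.swap[of _ I])

lemma logical_action_lsum: "logical_action n V (lsum I c F) = lsum I c (\<lambda>i. logical_action n V (F i))"
  unfolding logical_action_def by (simp add: mmul_lsum_right mmul_lsum_left)

definition pp :: "nat set \<Rightarrow> cfg \<Rightarrow> cfg \<Rightarrow> qop" where
  "pp Q al be = prodop Q (\<lambda>q. sigma (pidx (al q) (be q)))"

definition coef :: "nat set \<Rightarrow> qop \<Rightarrow> cfg \<times> cfg \<Rightarrow> complex" where
  "coef Q A p = (1/2)^card Q * (\<Sum>x\<in>cfgs Q. \<Sum>y\<in>cfgs Q. cnj (pp Q (fst p) (snd p) x y) * A x y)"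

lemma sum_prod_cfgs2:
  fixes h :: "nat \<Rightarrow> bool \<Rightarrow> bool \<Rightarrow> complex"
  assumes "finite Q"
  shows "(\<Sum>p\<in>cfgs Q \<times> cfgs Q. \<Prod>q\<in>Q. h q (fst p q) (snd p q)) = (\<Prod>q\<in>Q. \<Sum>a\<in>UNIV. \<Sum>b\<in>UNIV. h q a b)"
proof -
  have "(\<Sum>p\<in>cfgs Q \<times> cfgs Q. \<Prod>q\<in>Q. h q (fst p q) (snd p q)) =
        (\<Sum>al\<in>cfgs Q. \<Sum>be\<in>cfgs Q. \<Prod>q\<in>Q. h q (al q) (be q))"
    by (simp add: sum.cartesian_product case_prod_beta)
  also have "\<dots> = (\<Sum>al\<in>cfgs Q. \<Prod>q\<in>Q. h q (al q) True + h q (al q) False)"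
    by (intro sum.cong refl) (rule sum_prod_cfgs[OF assms])
  also have "\<dots> = (\<Prod>q\<in>Q. (h q True True + h q True False) + (h q False True + h q False False))"
    by (rule sum_prod_cfgs[OF assms])
  also have "\<dots> = (\<Prod>q\<in>Q. \<Sum>a\<in>UNIV. \<Sum>b\<in>UNIV. h q a b)"
    by (simp add: UNIV_bool add_ac)
  finally show ?thesis .
qed

lemma pauli_expansion:
  assumes fin: "finite Q" and A: "isop Q Q A"
  shows "A = lsum (cfgs Q \<times> cfgs Q) (coef Q A) (\<lambda>p. pp Q (fst p) (snd p))"
proof (rule isop_eqI[OF A])
  show "isop Q Q (lsum (cfgs Q \<times> cfgs Q) (coef Q A) (\<lambda>p. pp Q (fst p) (snd p)))"
    by (rule isopI) (auto simp: lsum_def pp_def prodop_apply)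
  fix x y assume xy: "x \<in> cfgs Q" "y \<in> cfgs Q"
  have inner: "(1/2)^card Q * (\<Sum>p\<in>cfgs Q \<times> cfgs Q. cnj (pp Q (fst p) (snd p) x' y') * pp Q (fst p) (snd p) x y)
     = (if x' = x \<and> y' = y then 1 else 0)" if x'y': "x' \<in> cfgs Q" "y' \<in> cfgs Q" for x' y'
  proof -
    define h where "h q a b = (1/2) * (cnj (sigma (pidx a b) (x' q) (y' q)) * sigma (pidx a b) (x q) (y q))" for q a b
    have "(1/2)^card Q * (\<Sum>p\<in>cfgs Q \<times> cfgs Q. cnj (pp Q (fst p) (snd p) x' y') * pp Q (fst p) (snd p) x y)
        = (\<Sum>p\<in>cfgs Q \<times> cfgs Q. \<Prod>q\<in>Q. h q (fst p q) (snd p q))"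
      unfolding sum_distrib_left
    proof (rule sum.cong[OF refl])
      fix p assume "p \<in> cfgs Q \<times> cfgs Q"
      have e: "(\<Prod>q\<in>Q. h q (fst p q) (snd p q)) = (\<Prod>q\<in>Q. 1/2) * ((\<Prod>q\<in>Q. cnj (sigma (pidx (fst p q) (snd p q)) (x' q) (y' q))) *
           (\<Prod>q\<in>Q. sigma (pidx (fst p q) (snd p q)) (x q) (y q)))"
        unfolding h_def prod.distrib ..
      show "(1/2)^card Q * (cnj (pp Q (fst p) (snd p) x' y') * pp Q (fst p) (snd p) x y) =
            (\<Prod>q\<in>Q. h q (fst p q) (snd p q))"
        unfolding e using xy x'y' by (simp only: pp_def prodop_apply cnj_prod if_True simp_thms prod_constant)
    qed
    also have "\<dots> = (\<Prod>q\<in>Q. \<Sum>a\<in>UNIV. \<Sum>b\<in>UNIV. h q a b)" by (rule sum_prod_cfgs2[OF fin])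
    also have "\<dots> = (\<Prod>q\<in>Q. if x' q = x q \<and> y' q = y q then 1 else 0)"
    proof (rule prod.cong[OF refl])
      fix q
      have "(\<Sum>a\<in>UNIV. \<Sum>b\<in>UNIV. h q a b) = (1/2) * (\<Sum>a\<in>UNIV. \<Sum>b\<in>UNIV. cnj (sigma (pidx a b) (x' q) (y' q)) * sigma (pidx a b) (x q) (y q))"
        unfolding h_def by (simp add: sum_distrib_left)
      also have "\<dots> = (if x' q = x q \<and> y' q = y q then 1 else 0)" by (simp add: sigma_complete)
      finally show "(\<Sum>a\<in>UNIV. \<Sum>b\<in>UNIV. h q a b) = (if x' q = x q \<and> y' q = y q then 1 else 0)" .
    qed
    also have "\<dots> = (if \<forall>q\<in>Q. x' q = x q \<and> y' q = y q then \<Prod>q\<in>Q. 1 else 0)"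
      by (rule prod_if_zero[OF fin])
    also have "(\<forall>q\<in>Q. x' q = x q \<and> y' q = y q) = (x' = x \<and> y' = y)"
      using cfgs_eq_iff[OF x'y'(1) xy(1)] cfgs_eq_iff[OF x'y'(2) xy(2)] by blast
    finally show ?thesis by simp
  qed
  have "lsum (cfgs Q \<times> cfgs Q) (coef Q A) (\<lambda>p. pp Q (fst p) (snd p)) x y =
     (\<Sum>p\<in>cfgs Q \<times> cfgs Q. (1/2)^card Q * (\<Sum>x'\<in>cfgs Q. \<Sum>y'\<in>cfgs Q. cnj (pp Q (fst p) (snd p) x' y') * A x' y') * pp Q (fst p) (snd p) x y)"
    by (simp add: lsum_def coef_def)
  also have "\<dots> = (\<Sum>x'\<in>cfgs Q. \<Sum>y'\<in>cfgs Q. A x' y' * ((1/2)^card Q * (\<Sum>p\<in>cfgs Q \<times> cfgs Q. cnj (pp Q (fst p) (snd p) x' y') * pp Q (fst p) (snd p) x y)))"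
    by (simp add: sum_distrib_left sum_distrib_right sum.swap[of _ "cfgs Q \<times> cfgs Q"] algebra_simps)
  also have "\<dots> = (\<Sum>x'\<in>cfgs Q. \<Sum>y'\<in>cfgs Q. A x' y' * (if x' = x \<and> y' = y then 1 else 0))"
    by (intro sum.cong refl) (simp add: inner)
  also have "\<dots> = (\<Sum>x'\<in>cfgs Q. if x' = x then (\<Sum>y'\<in>cfgs Q. if y' = y then A x y else 0) else 0)"
    by (intro sum.cong refl) (auto intro!: sum.cong)
  also have "\<dots> = A x y"
    using fin xy by (simp add: sum.delta')
  finally show "A x y = lsum (cfgs Q \<times> cfgs Q) (coef Q A) (\<lambda>p. pp Q (fst p) (snd p)) x y" by simp
qed


locale qcode =
  fixes n nL :: nat and G :: "qop set" and V :: qop and S :: "nat set"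
  assumes sc: "stabilizer_code n nL G V" and SL: "S \<subseteq> {..<nL}"
begin

abbreviation "NN \<equiv> {..<n}"
abbreviation "LL \<equiv> {..<nL}"
abbreviation "JJ \<equiv> {..<nL} - S"
abbreviation "Pi \<equiv> code_proj n nL V"

lemma finS[simp]: "finite S" using SL finite_subset by blast
lemma finJ[simp]: "finite JJ" by simp
lemma SJ_disj[simp]: "S \<inter> JJ = {}" by blast
lemma SJ_un[simp]: "S \<union> JJ = LL" using SL by blast

lemma V_isop: "isop NN LL V" using sc by (simp add: stabilizer_code_def)
lemma VV: "mmul NN (adj V) V = ident LL" using sc by (simp add: stabilizer_code_def)
lemma G_pauli: "g \<in> G \<Longrightarrow> g \<in> pauli_ops NN" using sc by (auto simp: stabilizer_code_def)
lemma codespace: "{\<psi>. isop NN {} \<psi> \<and> (\<forall>g\<in>G. mmul NN g \<psi> = \<psi>)} = {mmul LL V \<phi> | \<phi>. isop LL {} \<phi>}"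
  using sc by (simp add: stabilizer_code_def)
lemma logical_pauli: "P \<in> pauli_ops NN \<Longrightarrow> CSP n nL V P \<Longrightarrow> logical_action n V P \<in> pauli_ops LL"
  using sc unfolding stabilizer_code_def CSP_def logical_action_def by blast

lemma Pi_def': "Pi = mmul LL V (adj V)" by (simp add: code_proj_def)
lemma adj_Pi: "adj Pi = Pi" by (simp add: Pi_def' adj_mmul)
lemma Pi_isop: "isop NN NN Pi" unfolding Pi_def' by (rule isop_mmul[OF V_isop isop_adj[OF V_isop]])

lemma PiV: "mmul NN Pi V = V"
  unfolding Pi_def' mmul_assoc VV by (rule mmul_ident_right[OF _ V_isop]) simp

lemma intertwine: "CSP n nL V F \<Longrightarrow> mmul NN F V = mmul LL V (logical_action n V F)"
proof -
  assume c: "CSP n nL V F"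
  have "mmul NN F V = mmul NN F (mmul NN Pi V)" by (simp add: PiV)
  also have "\<dots> = mmul NN (mmul NN F Pi) V" by (simp add: mmul_assoc)
  also have "\<dots> = mmul NN (mmul NN Pi F) V" using c by (simp add: CSP_def)
  also have "\<dots> = mmul LL V (logical_action n V F)"
    by (simp add: Pi_def' mmul_assoc logical_action_def)
  finally show ?thesis .
qed

lemma CSP_adj: "CSP n nL V F \<Longrightarrow> CSP n nL V (adj F)"
  unfolding CSP_def
proof -
  assume "mmul NN F Pi = mmul NN Pi F"
  then have "adj (mmul NN F Pi) = adj (mmul NN Pi F)" by simp
  then show "mmul NN (adj F) Pi = mmul NN Pi (adj F)" by (simp add: adj_mmul adj_Pi)
qed

lemma la_adj: "logical_action n V (adj F) = adj (logical_action n V F)"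
  by (simp add: logical_action_def adj_mmul mmul_assoc)

lemma cancelV: "isop LL T X \<Longrightarrow> isop LL T Y \<Longrightarrow> mmul LL V X = mmul LL V Y \<Longrightarrow> X = Y"
proof -
  assume X: "isop LL T X" and Y: "isop LL T Y" and e: "mmul LL V X = mmul LL V Y"
  have "X = mmul LL (ident LL) X" by (simp add: mmul_ident_left[OF _ X])
  also have "\<dots> = mmul NN (adj V) (mmul LL V X)" by (simp add: VV[symmetric] mmul_assoc)
  also have "\<dots> = mmul NN (adj V) (mmul LL V Y)" by (simp add: e)
  also have "\<dots> = mmul LL (ident LL) Y" by (simp add: VV[symmetric] mmul_assoc)
  also have "\<dots> = Y" by (simp add: mmul_ident_left[OF _ Y])
  finally show ?thesis .
qed

lemma la_isop: "isop LL LL (logical_action n V F)"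
  unfolding logical_action_def
  by (rule isopI) (auto simp: mmul_def adj_def isopD[OF V_isop])

definition colv :: "nat set \<Rightarrow> cfg \<Rightarrow> qop" where
  "colv Q y = restr Q {} (\<lambda>x z. if x = y then 1 else 0)"

lemma colv_isop: "isop Q {} (colv Q y)" by (simp add: colv_def)

lemma mmul_colv: "finite Q \<Longrightarrow> y \<in> cfgs Q \<Longrightarrow> mmul Q A (colv Q y) x e0 = A x y"
  unfolding mmul_def colv_def restr_def
  by (simp add: if_distrib[of "\<lambda>t. A x _ * t"] sum.delta' cfgs_empty e0_def cong: if_cong)

lemma colv_ext:
  assumes "isop NN LL A" "isop NN LL B" "\<And>y. y \<in> cfgs LL \<Longrightarrow> mmul LL A (colv LL y) = mmul LL B (colv LL y)"
  shows "A = B"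
proof (rule isop_eqI[OF assms(1,2)])
  fix x y assume "x \<in> cfgs NN" "y \<in> cfgs LL"
  then show "A x y = B x y" using assms(3)[of y] mmul_colv[of LL y A x] mmul_colv[of LL y B x] by simp
qed

lemma gV: "g \<in> G \<Longrightarrow> mmul NN g V = V"
proof -
  assume g: "g \<in> G"
  have gi: "isop NN NN g" using G_pauli[OF g] by (auto elim!: pauli_opsE intro: isop_scal)
  show ?thesis
  proof (rule colv_ext[OF isop_mmul[OF gi V_isop] V_isop])
    fix y assume "y \<in> cfgs LL"
    have "mmul LL V (colv LL y) \<in> {mmul LL V \<phi> | \<phi>. isop LL {} \<phi>}" using colv_isop by blast
    then have "mmul NN g (mmul LL V (colv LL y)) = mmul LL V (colv LL y)"
      using g by (simp add: codespace[symmetric])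
    then show "mmul LL (mmul NN g V) (colv LL y) = mmul LL V (colv LL y)" by (simp add: mmul_assoc)
  qed
qed

end

lemma unit_phase: "c \<in> {1, -1, \<i>, - \<i>} \<Longrightarrow> cnj c * c = 1"
  by auto

lemma pauli_isop: "P \<in> pauli_ops Q \<Longrightarrow> isop Q Q P"
  by (auto elim!: pauli_opsE intro: isop_scal)

lemma adj_sigma_prodop: "adj (prodop Q (\<lambda>q. sigma (k q))) = prodop Q (\<lambda>q. sigma (k q))"
  by (simp add: adj_prodop)

lemma pauli_unitary:
  assumes "finite Q" "P \<in> pauli_ops Q"
  shows "mmul Q (adj P) P = ident Q" "mmul Q P (adj P) = ident Q"
proof -
  obtain c k where c: "c \<in> {1, -1, \<i>, - \<i>}" and P: "P = scal c (prodop Q (\<lambda>q. sigma (k q)))"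
    using assms(2) by (auto elim!: pauli_opsE)
  have pp: "mmul Q (prodop Q (\<lambda>q. sigma (k q))) (prodop Q (\<lambda>q. sigma (k q))) = ident Q"
    by (simp add: prodop_mmul[OF assms(1)] prodop_ident[OF assms(1)])
  have c1: "cnj c * c = 1" "c * cnj c = 1" using unit_phase[OF c] by (auto simp: mult.commute)
  show "mmul Q (adj P) P = ident Q" "mmul Q P (adj P) = ident Q"
    unfolding P adj_scal adj_sigma_prodop mmul_scal_left mmul_scal_right pp scal_scal c1 by simp_all
qed

lemma prodop_factor:
  assumes "finite Q"
  shows "prodop Q (\<lambda>q a b. e q * f q a b) = scal (\<Prod>q\<in>Q. e q) (prodop Q f)"
  by (rule ext, rule ext) (simp add: prodop_apply scal_def prod.distrib)

lemma prod_pm1: "finite Q \<Longrightarrow> (\<forall>q. e q = 1 \<or> e q = (-1::complex)) \<Longrightarrow> (\<Prod>q\<in>Q. e q) = 1 \<or> (\<Prod>q\<in>Q. e q) = -1"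
proof (induction Q rule: finite_induct)
  case empty then show ?case by simp
next
  case (insert a Q)
  then show ?case by (cases "e a = 1") auto
qed

lemma pauli_comm:
  assumes fin: "finite Q" and g: "g = scal c (prodop Q (\<lambda>q. sigma (m q)))"
  shows "\<exists>s. (s = 1 \<or> s = -1) \<and> mmul Q (prodop Q (\<lambda>q. sigma (k q))) g = scal s (mmul Q g (prodop Q (\<lambda>q. sigma (k q))))"
proof -
  have "\<forall>q. \<exists>e. (e = 1 \<or> e = (-1::complex)) \<and> m2 (sigma (k q)) (sigma (m q)) = (\<lambda>a b. e * m2 (sigma (m q)) (sigma (k q)) a b)"
  proof
    fix q
    from sigma_comm[of "k q" "m q"] show "\<exists>e. (e = 1 \<or> e = (-1::complex)) \<and> m2 (sigma (k q)) (sigma (m q)) = (\<lambda>a b. e * m2 (sigma (m q)) (sigma (k q)) a b)"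
    proof
      assume "m2 (sigma (k q)) (sigma (m q)) = m2 (sigma (m q)) (sigma (k q))"
      then show ?thesis by (intro exI[of _ 1]) simp
    next
      assume "m2 (sigma (k q)) (sigma (m q)) = (\<lambda>a b. - m2 (sigma (m q)) (sigma (k q)) a b)"
      then show ?thesis by (intro exI[of _ "-1"]) simp
    qed
  qed
  then obtain e where e: "\<And>q. e q = 1 \<or> e q = -1" "\<And>q. m2 (sigma (k q)) (sigma (m q)) = (\<lambda>a b. e q * m2 (sigma (m q)) (sigma (k q)) a b)"
    by metis
  have "mmul Q (prodop Q (\<lambda>q. sigma (k q))) g = scal c (prodop Q (\<lambda>q. m2 (sigma (k q)) (sigma (m q))))"
    by (simp add: g mmul_scal_right prodop_mmul[OF fin])
  also have "\<dots> = scal c (prodop Q (\<lambda>q a b. e q * m2 (sigma (m q)) (sigma (k q)) a b))"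
    by (simp only: e(2))
  also have "\<dots> = scal (\<Prod>q\<in>Q. e q) (mmul Q g (prodop Q (\<lambda>q. sigma (k q))))"
    by (simp add: prodop_factor[OF fin] g mmul_scal_left prodop_mmul[OF fin] scal_scal mult.commute)
  finally show ?thesis using prod_pm1[OF fin] e(1) by blast
qed

context qcode
begin

lemma VgV: "g \<in> G \<Longrightarrow> mmul NN (adj V) g = adj V"
proof -
  assume g: "g \<in> G"
  have "mmul NN (adj g) V = mmul NN (adj g) (mmul NN g V)" by (simp add: gV[OF g])
  also have "\<dots> = mmul NN (ident NN) V" by (simp add: mmul_assoc[symmetric] pauli_unitary[OF _ G_pauli[OF g]])
  also have "\<dots> = V" by (rule mmul_ident_left[OF _ V_isop]) simp
  finally have "adj (mmul NN (adj g) V) = adj V" by simp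
  then show ?thesis by (simp add: adj_mmul)
qed

lemma anti_zero:
  assumes g: "g \<in> G" and a: "mmul NN s g = scal (-1) (mmul NN g s)"
  shows "logical_action n V s = (\<lambda>x y. 0)"
proof -
  have "logical_action n V s = mmul NN (adj V) (mmul NN s (mmul NN g V))"
    by (simp add: logical_action_def gV[OF g])
  also have "\<dots> = mmul NN (adj V) (mmul NN (scal (-1) (mmul NN g s)) V)"
    by (simp add: mmul_assoc[symmetric] a)
  also have "\<dots> = scal (-1) (logical_action n V s)"
    by (simp add: mmul_scal_left mmul_scal_right mmul_assoc[symmetric] VgV[OF g]) (simp add: logical_action_def mmul_assoc)
  finally have e: "logical_action n V s = scal (-1) (logical_action n V s)" .
  show ?thesis
  proof (rule ext, rule ext)
    fix x y
    have "logical_action n V s x y = - logical_action n V s x y"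
      using fun_cong[OF fun_cong[OF e, of x], of y] by (simp add: scal_def)
    then show "logical_action n V s x y = 0" by simp
  qed
qed

lemma comm_PiV:
  assumes si: "isop NN NN s" and cm: "\<forall>g\<in>G. mmul NN s g = mmul NN g s"
  shows "mmul NN Pi (mmul NN s V) = mmul NN s V"
proof (rule colv_ext[OF isop_mmul[OF Pi_isop isop_mmul[OF si V_isop]] isop_mmul[OF si V_isop]])
  fix y assume y: "y \<in> cfgs LL"
  define \<psi> where "\<psi> = mmul NN s (mmul LL V (colv LL y))"
  have pi: "isop NN {} \<psi>" unfolding \<psi>_def by (rule isop_mmul[OF si isop_mmul[OF V_isop colv_isop]])
  have "\<forall>g\<in>G. mmul NN g \<psi> = \<psi>"
  proof
    fix g assume g: "g \<in> G"
    have "mmul NN g \<psi> = mmul LL (mmul NN (mmul NN g s) V) (colv LL y)" by (simp add: \<psi>_def mmul_assoc)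
    also have "\<dots> = mmul LL (mmul NN (mmul NN s g) V) (colv LL y)" using cm g by simp
    also have "\<dots> = \<psi>" by (simp add: \<psi>_def mmul_assoc gV[OF g])
    finally show "mmul NN g \<psi> = \<psi>" .
  qed
  with pi have "\<psi> \<in> {mmul LL V \<phi> | \<phi>. isop LL {} \<phi>}" by (simp add: codespace[symmetric])
  then obtain \<phi> where ph: "\<psi> = mmul LL V \<phi>" by blast
  have "mmul NN Pi \<psi> = \<psi>" by (simp add: ph mmul_assoc[symmetric] PiV)
  then show "mmul LL (mmul NN Pi (mmul NN s V)) (colv LL y) = mmul LL (mmul NN s V) (colv LL y)"
    by (simp add: \<psi>_def mmul_assoc)
qed

lemma comm_CSP:
  assumes si: "isop NN NN s" and h: "adj s = s" and cm: "\<forall>g\<in>G. mmul NN s g = mmul NN g s"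
  shows "CSP n nL V s"
proof -
  have 1: "mmul NN s Pi = mmul NN Pi (mmul NN s Pi)"
  proof -
    have "mmul NN s Pi = mmul LL (mmul NN s V) (adj V)" by (simp add: Pi_def' mmul_assoc)
    also have "\<dots> = mmul LL (mmul NN Pi (mmul NN s V)) (adj V)" by (simp add: comm_PiV[OF si cm])
    also have "\<dots> = mmul NN Pi (mmul NN s Pi)" by (simp add: Pi_def' mmul_assoc)
    finally show ?thesis .
  qed
  have "mmul NN Pi s = adj (mmul NN (adj s) (adj Pi))" by (simp add: adj_mmul)
  also have "\<dots> = adj (mmul NN s Pi)" by (simp add: h adj_Pi)
  also have "\<dots> = adj (mmul NN Pi (mmul NN s Pi))" using 1 by simp
  also have "\<dots> = mmul NN Pi (mmul NN s Pi)" by (simp add: adj_mmul adj_Pi h mmul_assoc)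
  finally show ?thesis using 1 by (simp add: CSP_def)
qed

end

lemma lsum_cong: "(\<And>i. i \<in> I \<Longrightarrow> F i = F' i) \<Longrightarrow> lsum I c F = lsum I c F'"
  unfolding lsum_def by (simp cong: sum.cong)

lemma tens_lsum: "tens Q1 Q2 (lsum I c F) B = lsum I c (\<lambda>i. tens Q1 Q2 (F i) B)"
  by (rule ext, rule ext) (auto simp: tens_apply lsum_def sum_distrib_right mult.assoc)

lemma tr_ident: "finite Q \<Longrightarrow> tr Q (ident Q) \<noteq> 0"
proof -
  assume f: "finite Q"
  have "tr Q (ident Q) = of_nat (card (cfgs Q))" by (simp add: tr_def ident_apply)
  moreover have "cfgs Q \<noteq> {}" using e0_cfgs[of Q] by blast
  then have "card (cfgs Q) \<noteq> 0" using f by (simp add: card_eq_0_iff)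
  ultimately show ?thesis by simp
qed

lemma tr_zero: "tr Q (mmul Q A (\<lambda>x y. 0)) = 0" by (simp add: tr_def mmul_def)

lemma sigma_trace': "i < 4 \<Longrightarrow> j < 4 \<Longrightarrow>
   m2 (sigma i) (sigma j) True True + m2 (sigma i) (sigma j) False False = (if i = j then 2 else 0)"
  using sigma_trace[of i j] by simp

context qcode
begin

lemma SLL_un[simp]: "S \<union> LL = LL" using SL by blast

lemma tensPL:
  assumes P: "P = scal c1 (prodop S (\<lambda>q. sigma (m q)))"
  shows "tens S JJ P (ident JJ) = scal c1 (prodop LL (\<lambda>q. sigma (if q \<in> S then m q else 0)))"
proof -
  have "prodop S (\<lambda>q. sigma (m q)) = prodop S (\<lambda>q. sigma (if q \<in> S then m q else 0))"
    by (rule prodop_cong) simp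
  moreover have "ident JJ = prodop JJ (\<lambda>q. sigma (if q \<in> S then m q else 0))"
    by (rule prodop_ident[symmetric]) (auto simp: sigma0)
  moreover have "prodop (S \<union> JJ) (\<lambda>q. sigma (if q \<in> S then m q else 0)) =
     tens S JJ (prodop S (\<lambda>q. sigma (if q \<in> S then m q else 0))) (prodop JJ (\<lambda>q. sigma (if q \<in> S then m q else 0)))"
    by (rule prodop_split) auto
  moreover have "S \<union> JJ = LL" by simp
  ultimately show ?thesis by (simp add: P tens_scal)
qed

lemma cleaning:
  assumes C: "C \<subseteq> NN" "correctable n nL V S C" and P: "P \<in> pauli_ops S"
  shows "\<exists>k a. (\<forall>q\<in>C. k q = 0) \<and> a \<noteq> 0 \<and> CSP n nL V (prodop NN (\<lambda>q. sigma (k q))) \<and>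
     logical_action n V (prodop NN (\<lambda>q. sigma (k q))) = tens S JJ (scal a P) (ident JJ)"
proof -
  define PL where "PL = tens S JJ P (ident JJ)"
  have Pi: "isop S S P" using pauli_isop[OF P] .
  obtain A' where A': "isop (NN - C) (NN - C) A'"
     and B: "CSP n nL V (tens (NN - C) C A' (ident C))"
     and laB: "logical_action n V (tens (NN - C) C A' (ident C)) = PL"
    using C(2) Pi unfolding correctable_def Let_def PL_def by blast
  define Q where "Q = NN - C"
  have fQ: "finite Q" by (simp add: Q_def)
  have fC: "finite C" using C(1) finite_subset by blast
  define I where "I = cfgs Q \<times> cfgs Q"
  define cf where "cf = coef Q A'"
  have ppN: "pp NN (fst i) (snd i) = tens Q C (pp Q (fst i) (snd i)) (ident C)" if "i \<in> I" for i
  proof -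
    have QC: "Q \<union> C = NN" "Q \<inter> C = {}" using C(1) by (auto simp: Q_def)
    have "pp NN (fst i) (snd i) = tens Q C (pp Q (fst i) (snd i)) (prodop C (\<lambda>q. sigma (pidx (fst i q) (snd i q))))"
      unfolding pp_def by (subst QC(1)[symmetric], rule prodop_split[OF fQ fC QC(2)])
    also have "prodop C (\<lambda>q. sigma (pidx (fst i q) (snd i q))) = ident C"
    proof (rule prodop_ident[OF fC])
      fix q assume "q \<in> C"
      then have "\<not> fst i q" "\<not> snd i q" using that by (auto simp: I_def Q_def cfgs_def)
      then show "sigma (pidx (fst i q) (snd i q)) = id2" by (simp add: sigma0)
    qed
    finally show ?thesis .
  qed
  have Bexp: "tens (NN - C) C A' (ident C) = lsum I cf (\<lambda>i. pp NN (fst i) (snd i))"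
  proof -
    have "tens (NN - C) C A' (ident C) = tens Q C (lsum I cf (\<lambda>p. pp Q (fst p) (snd p))) (ident C)"
      using pauli_expansion[OF fQ A'[folded Q_def]] by (simp add: Q_def I_def cf_def)
    also have "\<dots> = lsum I cf (\<lambda>i. pp NN (fst i) (snd i))"
      by (simp add: tens_lsum ppN cong: lsum_cong)
    finally show ?thesis .
  qed
  define Phi where "Phi F = tr LL (mmul LL (adj PL) (logical_action n V F))" for F
  have PhiB: "Phi (tens (NN - C) C A' (ident C)) = (\<Sum>i\<in>I. cf i * Phi (pp NN (fst i) (snd i)))"
    unfolding Phi_def Bexp logical_action_lsum mmul_lsum_right tr_lsum ..
  have PLPL: "mmul LL (adj PL) PL = ident LL"
  proof -
    have "mmul (S \<union> JJ) (adj PL) PL = tens S JJ (mmul S (adj P) P) (mmul JJ (ident JJ) (ident JJ))"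
      unfolding PL_def tens_adj adj_ident by (rule tens_mmul) auto
    also have "\<dots> = ident (S \<union> JJ)"
      by (simp add: pauli_unitary[OF finS P] mmul_ident_left[OF finJ isop_ident] tens_ident)
    finally show ?thesis by simp
  qed
  have "Phi (tens (NN - C) C A' (ident C)) \<noteq> 0"
    unfolding Phi_def laB PLPL by (rule tr_ident) simp
  then obtain i where i: "i \<in> I" "cf i * Phi (pp NN (fst i) (snd i)) \<noteq> 0"
    unfolding PhiB by (meson sum.neutral)
  define k where "k q = pidx (fst i q) (snd i q)" for q
  define s where "s = prodop NN (\<lambda>q. sigma (k q))"
  have s_pp: "s = pp NN (fst i) (snd i)" by (simp add: s_def pp_def k_def)
  have k0: "\<forall>q\<in>C. k q = 0"
    using i(1) by (auto simp: k_def I_def Q_def cfgs_def)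
  have Phis: "Phi s \<noteq> 0" using i(2) s_pp by auto
  have las0: "logical_action n V s \<noteq> (\<lambda>x y. 0)"
  proof
    assume "logical_action n V s = (\<lambda>x y. 0)"
    then have "Phi s = 0" by (simp add: Phi_def tr_zero)
    then show False using Phis by simp
  qed
  have sP: "s \<in> pauli_ops NN" unfolding s_def using pauli_opsI[of 1 k NN] by (simp add: k_def)
  have si: "isop NN NN s" by (simp add: s_def)
  have cm: "\<forall>g\<in>G. mmul NN s g = mmul NN g s"
  proof
    fix g assume g: "g \<in> G"
    obtain c m where gm: "g = scal c (prodop NN (\<lambda>q. sigma (m q)))"
      using G_pauli[OF g] by (auto elim!: pauli_opsE)
    obtain sg where sg: "sg = 1 \<or> sg = -1" "mmul NN s g = scal sg (mmul NN g s)"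
      using pauli_comm[OF _ gm, of k] by (auto simp: s_def)
    show "mmul NN s g = mmul NN g s"
    proof (cases "sg = 1")
      case True then show ?thesis using sg by simp
    next
      case False
      then have "mmul NN s g = scal (-1) (mmul NN g s)" using sg by simp
      then have "logical_action n V s = (\<lambda>x y. 0)" by (rule anti_zero[OF g])
      then show ?thesis using las0 by simp
    qed
  qed
  have sh: "adj s = s" by (simp add: s_def adj_sigma_prodop)
  have sCSP: "CSP n nL V s" by (rule comm_CSP[OF si sh cm])
  have laP: "logical_action n V s \<in> pauli_ops LL" by (rule logical_pauli[OF sP sCSP])
  obtain c2 m2' where c2: "c2 \<in> {1, -1, \<i>, - \<i>}" "\<forall>q. m2' q < 4"
     and las: "logical_action n V s = scal c2 (prodop LL (\<lambda>q. sigma (m2' q)))"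
    using laP by (auto elim!: pauli_opsE)
  obtain c1 m where c1: "c1 \<in> {1, -1, \<i>, - \<i>}" "\<forall>q. m q < 4"
     and Pm: "P = scal c1 (prodop S (\<lambda>q. sigma (m q)))"
    using P by (auto elim!: pauli_opsE)
  define m1 where "m1 q = (if q \<in> S then m q else 0)" for q
  have PLm: "PL = scal c1 (prodop LL (\<lambda>q. sigma (m1 q)))"
    unfolding PL_def m1_def by (rule tensPL[OF Pm])
  have m14: "m1 q < 4" for q using c1(2) by (simp add: m1_def)
  have "Phi s = cnj c1 * c2 * tr LL (prodop LL (\<lambda>q. m2 (sigma (m1 q)) (sigma (m2' q))))"
    unfolding Phi_def las PLm adj_scal adj_sigma_prodop mmul_scal_left mmul_scal_right
      prodop_mmul[OF finite_lessThan]
    by (simp add: tr_def scal_def sum_distrib_left mult.assoc mult.left_commute)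
  also have "\<dots> = cnj c1 * c2 * (\<Prod>q\<in>LL. if m1 q = m2' q then 2 else 0)"
    by (simp add: tr_prodop sigma_trace' m14 c2(2))
  finally have Phis': "Phi s = cnj c1 * c2 * (\<Prod>q\<in>LL. if m1 q = m2' q then 2 else 0)" .
  have meq: "\<forall>q\<in>LL. m1 q = m2' q"
  proof (rule ccontr)
    assume "\<not> (\<forall>q\<in>LL. m1 q = m2' q)"
    then have "(\<Prod>q\<in>LL. if m1 q = m2' q then 2 else (0::complex)) = 0"
      by (subst prod_zero_iff) auto
    then show False using Phis Phis' by simp
  qed
  have c1n: "c1 \<noteq> 0" using c1(1) by auto
  have c2n: "c2 \<noteq> 0" using Phis Phis' by auto
  have "logical_action n V s = scal (c2 / c1) PL"
  proof -
    have "prodop LL (\<lambda>q. sigma (m2' q)) = prodop LL (\<lambda>q. sigma (m1 q))"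
      by (rule prodop_cong) (simp add: meq)
    then show ?thesis using c1n by (simp add: las PLm scal_scal)
  qed
  then have "logical_action n V s = tens S JJ (scal (c2 / c1) P) (ident JJ)"
    by (simp add: PL_def tens_scal)
  then show ?thesis using k0 c1n c2n sCSP unfolding s_def by (intro exI[of _ k] exI[of _ "c2 / c1"]) simp
qed

end

context qcode
begin

definition TT :: "qop \<Rightarrow> qop \<Rightarrow> qop" where "TT A B = tens S JJ A B"

lemma TT_isop[simp]: "isop LL LL (TT A B)"
  using isop_tens[of S JJ A B] by (simp add: TT_def)

lemma TT_mul: "mmul LL (TT A B) (TT C D) = TT (mmul S A C) (mmul JJ B D)"
  using tens_mmul[OF finS finJ SJ_disj, of A B C D] by (simp add: TT_def)

lemma TT_adj: "adj (TT A B) = TT (adj A) (adj B)" by (simp add: TT_def tens_adj)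
lemma TT_scal: "TT (scal c A) B = scal c (TT A B)" by (simp add: TT_def tens_scal)
lemma TT_scal2: "TT A (scal c B) = scal c (TT A B)" by (simp add: TT_def tens_scal2)
lemma TT_ident: "TT (ident S) (ident JJ) = ident LL"
  using tens_ident[of S JJ] by (simp add: TT_def)

lemma trivial_region:
  assumes R: "R \<subseteq> NN" "correctable n nL V S R"
    and K: "\<forall>q\<in>NN - R. f q = id2"
    and KV: "mmul NN (prodop NN f) V = mmul LL V X" and Xi: "isop LL LL X"
    and AL: "isop S S AL"
  shows "mmul LL X (TT AL (ident JJ)) = mmul LL (TT AL (ident JJ)) X"
proof -
  obtain A' where A': "isop (NN - R) (NN - R) A'"
     and B: "CSP n nL V (tens (NN - R) R A' (ident R))"
     and laB: "logical_action n V (tens (NN - R) R A' (ident R)) = TT AL (ident JJ)"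
    using R(2) AL unfolding correctable_def Let_def TT_def by blast
  define B where "B = tens (NN - R) R A' (ident R)"
  have fR: "finite R" using R(1) finite_subset by blast
  have fNR: "finite (NN - R)" by simp
  have dj: "(NN - R) \<inter> R = {}" by blast
  have un: "(NN - R) \<union> R = NN" using R(1) by blast
  have BV: "mmul NN B V = mmul LL V (TT AL (ident JJ))" using intertwine[OF B] laB by (simp add: B_def)
  have Ksplit: "prodop NN f = tens (NN - R) R (ident (NN - R)) (prodop R f)"
  proof -
    have "prodop ((NN - R) \<union> R) f = tens (NN - R) R (prodop (NN - R) f) (prodop R f)"
      by (rule prodop_split[OF fNR fR dj])
    moreover have "prodop (NN - R) f = ident (NN - R)" by (rule prodop_ident[OF fNR]) (use K in auto)
    ultimately show ?thesis using un by simp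
  qed
  have KB: "mmul NN (prodop NN f) B = mmul NN B (prodop NN f)"
  proof -
    have "mmul ((NN - R) \<union> R) (prodop NN f) B = tens (NN - R) R A' (prodop R f)"
      unfolding Ksplit B_def tens_mmul[OF fNR fR dj]
      by (simp add: mmul_ident_left[OF fNR A'] mmul_ident_right[OF fR isop_prodop])
    moreover have "mmul ((NN - R) \<union> R) B (prodop NN f) = tens (NN - R) R A' (prodop R f)"
      unfolding Ksplit B_def tens_mmul[OF fNR fR dj]
      by (simp add: mmul_ident_right[OF fNR A'] mmul_ident_left[OF fR isop_prodop])
    ultimately show ?thesis using un by simp
  qed
  have "mmul LL V (mmul LL X (TT AL (ident JJ))) = mmul LL (mmul LL V X) (TT AL (ident JJ))"
    by (simp add: mmul_assoc)
  also have "\<dots> = mmul LL (mmul NN (prodop NN f) V) (TT AL (ident JJ))" by (simp add: KV)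
  also have "\<dots> = mmul NN (prodop NN f) (mmul NN B V)" by (simp add: mmul_assoc BV)
  also have "\<dots> = mmul NN (mmul NN (prodop NN f) B) V" by (simp add: mmul_assoc)
  also have "\<dots> = mmul NN (mmul NN B (prodop NN f)) V" by (simp add: KB)
  also have "\<dots> = mmul NN B (mmul LL V X)" by (simp add: mmul_assoc KV)
  also have "\<dots> = mmul LL (mmul NN B V) X" by (simp add: mmul_assoc)
  also have "\<dots> = mmul LL V (mmul LL (TT AL (ident JJ)) X)"
    by (simp add: mmul_assoc BV)
  finally show ?thesis
    by (rule cancelV[OF isop_mmul[OF Xi TT_isop] isop_mmul[OF TT_isop Xi]])
qed

end

lemma pauli_sq:
  assumes "finite Q" "P \<in> pauli_ops Q"
  shows "\<exists>p. p \<noteq> 0 \<and> mmul Q P P = scal p (ident Q)"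
proof -
  obtain c k where c: "c \<in> {1, -1, \<i>, - \<i>}" and P: "P = scal c (prodop Q (\<lambda>q. sigma (k q)))"
    using assms(2) by (auto elim!: pauli_opsE)
  have pp: "mmul Q (prodop Q (\<lambda>q. sigma (k q))) (prodop Q (\<lambda>q. sigma (k q))) = ident Q"
    by (simp add: prodop_mmul[OF assms(1)] prodop_ident[OF assms(1)])
  have "c * c \<noteq> 0" using c by auto
  moreover have "mmul Q P P = scal (c * c) (ident Q)"
    unfolding P mmul_scal_left mmul_scal_right pp scal_scal by simp
  ultimately show ?thesis by blast
qed

lemma mmul_ident_left': "finite Q \<Longrightarrow> isop Q R A \<Longrightarrow> mmul Q (ident Q) A = A" by (rule mmul_ident_left)

lemma S_algebra:
  fixes W P Q :: qop
  assumes fin: "finite S" and Wi: "isop S S W" and Pi: "isop S S P" and Qi: "isop S S Q"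
    and W1: "mmul S (adj W) W = scal mu (ident S)" and W2: "mmul S W (adj W) = scal mu' (ident S)"
    and P2: "mmul S P P = scal p (ident S)" and Q2: "mmul S Q Q = scal q (ident S)"
    and nz: "mu \<noteq> 0" "mu' \<noteq> 0" "p \<noteq> 0" "q \<noteq> 0" "a \<noteq> 0" "b \<noteq> 0"
    and X: "mmul S (mmul S (mmul S (mmul S (mmul S (mmul S W (scal a P)) (adj W)) (scal a P)) (scal b Q))
              (mmul S (mmul S (mmul S (scal a P) W) (scal a P)) (adj W))) (scal b Q) = scal c (ident S)"
  shows "\<exists>g. mmul S (mmul S (mmul S (mmul S W P) (adj W)) P) Q = scal g (mmul S Q (mmul S (mmul S (mmul S W P) (adj W)) P))"
proof -
  have Wdi: "isop S S (adj W)" using isop_adj[OF Wi] .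
  have W1': "mmul S (adj W) (mmul S W Y) = scal mu Y" if "isop S S Y" for Y
    by (simp add: mmul_assoc[symmetric] W1 mmul_scal_left mmul_ident_left[OF fin that])
  have W2': "mmul S W (mmul S (adj W) Y) = scal mu' Y" if "isop S S Y" for Y
    by (simp add: mmul_assoc[symmetric] W2 mmul_scal_left mmul_ident_left[OF fin that])
  have P2': "mmul S P (mmul S P Y) = scal p Y" if "isop S S Y" for Y
    by (simp add: mmul_assoc[symmetric] P2 mmul_scal_left mmul_ident_left[OF fin that])
  have Q2': "mmul S Q (mmul S Q Y) = scal q Y" if "isop S S Y" for Y
    by (simp add: mmul_assoc[symmetric] Q2 mmul_scal_left mmul_ident_left[OF fin that])
  note iso = isop_mmul Wi Pi Qi Wdi isop_scal
  have idL: "mmul S (ident S) Y = Y" if "isop S S Y" for Y using mmul_ident_left[OF fin that] .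
  have idR: "mmul S Y (ident S) = Y" if "isop S S Y" for Y using mmul_ident_right[OF fin that] .
  have "scal c (mmul S Q (mmul S W (mmul S P (mmul S (adj W) P)))) =
     mmul S (scal c (ident S)) (mmul S Q (mmul S W (mmul S P (mmul S (adj W) P))))"
    by (simp add: mmul_scal_left idL iso)
  also have "\<dots> = scal (a*a*b*a*a*b*q*mu*p*mu'*p) (mmul S W (mmul S P (mmul S (adj W) (mmul S P Q))))"
    unfolding X[symmetric]
    by (simp add: mmul_assoc mmul_scal_left mmul_scal_right scal_scal W1' W2' P2' Q2' iso
       P2 idR mult_ac)
  finally have e: "scal c (mmul S Q (mmul S W (mmul S P (mmul S (adj W) P)))) =
     scal (a*a*b*a*a*b*q*mu*p*mu'*p) (mmul S W (mmul S P (mmul S (adj W) (mmul S P Q))))" .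
  define k where "k = a*a*b*a*a*b*q*mu*p*mu'*p"
  have k0: "k \<noteq> 0" using nz by (simp add: k_def)
  define A where "A = mmul S Q (mmul S W (mmul S P (mmul S (adj W) P)))"
  define B where "B = mmul S W (mmul S P (mmul S (adj W) (mmul S P Q)))"
  have e': "scal c A = scal k B" using e by (simp add: A_def B_def k_def)
  have "mmul S (mmul S (mmul S (mmul S W P) (adj W)) P) Q = B" by (simp add: B_def mmul_assoc)
  also have "B = scal (1/k) (scal k B)" using k0 by (simp add: scal_scal)
  also have "\<dots> = scal (1/k) (scal c A)" using e' by simp
  also have "\<dots> = scal (c/k) (mmul S Q (mmul S (mmul S (mmul S W P) (adj W)) P))"
    by (simp add: scal_scal A_def mmul_assoc)
  finally show ?thesis by blast
qed


context qcode
begin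

lemma CSP_mmul: "CSP n nL V A \<Longrightarrow> CSP n nL V B \<Longrightarrow> CSP n nL V (mmul NN A B)"
  unfolding CSP_def by (simp add: mmul_assoc) (simp add: mmul_assoc[symmetric])

lemma la_mmul: "CSP n nL V A \<Longrightarrow> CSP n nL V B \<Longrightarrow>
   logical_action n V (mmul NN A B) = mmul LL (logical_action n V A) (logical_action n V B)"
proof -
  assume A: "CSP n nL V A" and B: "CSP n nL V B"
  have "logical_action n V (mmul NN A B) = mmul NN (adj V) (mmul NN A (mmul NN B V))"
    by (simp add: logical_action_def mmul_assoc)
  also have "\<dots> = mmul NN (adj V) (mmul LL (mmul NN A V) (logical_action n V B))"
    by (simp add: intertwine[OF B] mmul_assoc)
  also have "\<dots> = mmul LL (mmul NN (adj V) (mmul LL V (logical_action n V A))) (logical_action n V B)"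
    by (simp add: intertwine[OF A] mmul_assoc)
  also have "\<dots> = mmul LL (logical_action n V A) (logical_action n V B)"
    by (simp add: mmul_assoc[symmetric] VV mmul_ident_left[OF _ la_isop])
  finally show ?thesis .
qed

lemma TT_inv:
  assumes "isop S S A" "isop JJ JJ B" "TT A B = ident LL"
  shows "\<exists>mu. mu \<noteq> 0 \<and> A = scal mu (ident S) \<and> B = scal (1/mu) (ident JJ)"
  using tens_ident_inv[OF finS finJ SJ_disj assms(1,2)] assms(3) by (simp add: TT_def)

lemma unitary_logical:
  assumes U: "U = prodop NN u" "\<forall>q\<in>NN. unit2 (u q)" "CSP n nL V U"
    and Wi: "isop S S W" and Zi: "isop JJ JJ Z" and laU: "logical_action n V U = TT W Z"
  shows "\<exists>mu. mu \<noteq> 0 \<and> mmul S (adj W) W = scal mu (ident S)"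
        "\<exists>mu. mu \<noteq> 0 \<and> mmul S W (adj W) = scal mu (ident S) \<and> mmul JJ Z (adj Z) = scal (1/mu) (ident JJ)"
proof -
  have Ud: "adj U = prodop NN (\<lambda>q. adj2 (u q))" by (simp add: U(1) adj_prodop)
  have UdU: "mmul NN (adj U) U = ident NN"
  proof -
    have "mmul NN (adj U) U = prodop NN (\<lambda>q. m2 (adj2 (u q)) (u q))"
      by (simp add: U(1) adj_prodop prodop_mmul)
    also have "\<dots> = ident NN" by (rule prodop_ident) (use U(2) unit2_def in auto)
    finally show ?thesis .
  qed
  have UUd: "mmul NN U (adj U) = ident NN"
  proof -
    have "mmul NN U (adj U) = prodop NN (\<lambda>q. m2 (u q) (adj2 (u q)))"
      by (simp add: U(1) adj_prodop prodop_mmul)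
    also have "\<dots> = ident NN" by (rule prodop_ident) (use U(2) unit2_def in auto)
    finally show ?thesis .
  qed
  have cUd: "CSP n nL V (adj U)" by (rule CSP_adj[OF U(3)])
  have laUd: "logical_action n V (adj U) = TT (adj W) (adj Z)" by (simp add: la_adj laU TT_adj)
  have "TT (mmul S (adj W) W) (mmul JJ (adj Z) Z) = logical_action n V (mmul NN (adj U) U)"
    by (simp add: la_mmul[OF cUd U(3)] laUd laU TT_mul)
  also have "\<dots> = ident LL"
    by (simp add: UdU logical_action_def mmul_ident_left[OF _ V_isop] VV)
  finally have 1: "TT (mmul S (adj W) W) (mmul JJ (adj Z) Z) = ident LL" .
  have "TT (mmul S W (adj W)) (mmul JJ Z (adj Z)) = logical_action n V (mmul NN U (adj U))"
    by (simp add: la_mmul[OF U(3) cUd] laUd laU TT_mul)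
  also have "\<dots> = ident LL"
    by (simp add: UUd logical_action_def mmul_ident_left[OF _ V_isop] VV)
  finally have 2: "TT (mmul S W (adj W)) (mmul JJ Z (adj Z)) = ident LL" .
  show "\<exists>mu. mu \<noteq> 0 \<and> mmul S (adj W) W = scal mu (ident S)"
    using TT_inv[OF isop_mmul[OF isop_adj[OF Wi] Wi] isop_mmul[OF isop_adj[OF Zi] Zi] 1] by blast
  show "\<exists>mu. mu \<noteq> 0 \<and> mmul S W (adj W) = scal mu (ident S) \<and> mmul JJ Z (adj Z) = scal (1/mu) (ident JJ)"
    using TT_inv[OF isop_mmul[OF Wi isop_adj[OF Wi]] isop_mmul[OF Zi isop_adj[OF Zi]] 2] by blast
qed

end

definition k1 where "k1 u s = m2 (m2 (m2 u s) (adj2 u)) s"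
definition k1d where "k1d u s = m2 (m2 (m2 s u) s) (adj2 u)"
definition f2 where "f2 u s t = m2 (m2 (m2 (k1 u s) t) (k1d u s)) t"

lemma f2_R0: "unit2 u \<Longrightarrow> f2 u id2 (sigma j) = id2"
  unfolding f2_def k1_def k1d_def unit2_def by simp

lemma f2_R1: "unit2 u \<Longrightarrow> f2 u (sigma i) id2 = id2"
proof -
  assume u: "unit2 u"
  have k: "unit2 (k1 u (sigma i))" unfolding k1_def
    by (intro unit2_m2 unit2_adj2 u unit2_sigma)
  have "k1d u (sigma i) = adj2 (k1 u (sigma i))"
    by (simp add: k1_def k1d_def adj2_m2 m2_assoc)
  then show ?thesis using k unfolding f2_def unit2_def by simp
qed

lemma scal_cancel: "c \<noteq> 0 \<Longrightarrow> scal c A = scal c B \<Longrightarrow> A = B"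
proof -
  assume c: "c \<noteq> 0" and e: "scal c A = scal c B"
  have "A = scal (1/c) (scal c A)" using c by (simp add: scal_scal)
  also have "\<dots> = B" using c by (simp add: e scal_scal)
  finally show ?thesis .
qed

context qcode
begin

lemma core_comm:
  assumes U: "U = prodop NN u" "\<forall>q\<in>NN. unit2 (u q)" "CSP n nL V U"
    and Wi: "isop S S W" and Zi: "isop JJ JJ Z" and laU: "logical_action n V U = TT W Z"
    and R0: "R0 \<subseteq> NN" "correctable n nL V S R0"
    and R1: "R1 \<subseteq> NN" "correctable n nL V S R1"
    and R2: "R2 \<subseteq> NN" "correctable n nL V S R2"
    and part: "NN - R2 \<subseteq> R0 \<union> R1"
    and P: "P \<in> pauli_ops S" and Q: "Q \<in> pauli_ops S"
  shows "\<exists>g. mmul S (mmul S (mmul S (mmul S W P) (adj W)) P) Q = scal g (mmul S Q (mmul S (mmul S (mmul S W P) (adj W)) P))"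
proof -
  obtain mu where mu: "mu \<noteq> 0" "mmul S (adj W) W = scal mu (ident S)"
    using unitary_logical(1)[OF U Wi Zi laU] by blast
  obtain mu' where mu': "mu' \<noteq> 0" "mmul S W (adj W) = scal mu' (ident S)" "mmul JJ Z (adj Z) = scal (1/mu') (ident JJ)"
    using unitary_logical(2)[OF U Wi Zi laU] by blast
  obtain kP a where kP: "\<forall>q\<in>R0. kP q = 0" "a \<noteq> 0" "CSP n nL V (prodop NN (\<lambda>q. sigma (kP q)))"
     "logical_action n V (prodop NN (\<lambda>q. sigma (kP q))) = TT (scal a P) (ident JJ)"
    using cleaning[OF R0 P] unfolding TT_def by blast
  obtain kQ b where kQ: "\<forall>q\<in>R1. kQ q = 0" "b \<noteq> 0" "CSP n nL V (prodop NN (\<lambda>q. sigma (kQ q)))"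
     "logical_action n V (prodop NN (\<lambda>q. sigma (kQ q))) = TT (scal b Q) (ident JJ)"
    using cleaning[OF R1 Q] unfolding TT_def by blast
  define sP where "sP = prodop NN (\<lambda>q. sigma (kP q))"
  define sQ where "sQ = prodop NN (\<lambda>q. sigma (kQ q))"
  define Ud where "Ud = adj U"
  have cUd: "CSP n nL V Ud" unfolding Ud_def by (rule CSP_adj[OF U(3)])
  have laUd: "logical_action n V Ud = TT (adj W) (adj Z)" by (simp add: Ud_def la_adj laU TT_adj)
  have cP: "CSP n nL V sP" using kP(3) by (simp add: sP_def)
  have cQ: "CSP n nL V sQ" using kQ(3) by (simp add: sQ_def)
  define K where "K = mmul NN (mmul NN (mmul NN U sP) Ud) sP"
  define Kd where "Kd = mmul NN (mmul NN (mmul NN sP U) sP) Ud"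
  define K2 where "K2 = mmul NN (mmul NN (mmul NN K sQ) Kd) sQ"
  have cK: "CSP n nL V K" unfolding K_def by (intro CSP_mmul U(3) cP cUd)
  have cKd: "CSP n nL V Kd" unfolding Kd_def by (intro CSP_mmul U(3) cP cUd)
  have cK2: "CSP n nL V K2" unfolding K2_def by (intro CSP_mmul cK cKd cQ)
  define KS where "KS = mmul S (mmul S (mmul S W (scal a P)) (adj W)) (scal a P)"
  define KdS where "KdS = mmul S (mmul S (mmul S (scal a P) W) (scal a P)) (adj W)"
  define Xs where "Xs = mmul S (mmul S (mmul S KS (scal b Q)) KdS) (scal b Q)"
  define KJ where "KJ = mmul JJ (mmul JJ (mmul JJ Z (ident JJ)) (adj Z)) (ident JJ)"
  define KdJ where "KdJ = mmul JJ (mmul JJ (mmul JJ (ident JJ) Z) (ident JJ)) (adj Z)"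
  define Xj where "Xj = mmul JJ (mmul JJ (mmul JJ KJ (ident JJ)) KdJ) (ident JJ)"
  have laK2: "logical_action n V K2 = TT Xs Xj"
    unfolding K2_def K_def Kd_def
    by (simp add: la_mmul CSP_mmul U(3) cP cUd cQ laU laUd kP(4)[folded sP_def] kQ(4)[folded sQ_def] TT_mul
        Xs_def KS_def KdS_def Xj_def KJ_def KdJ_def)
  have Zdi: "isop JJ JJ (adj Z)" by (rule isop_adj[OF Zi])
  have idLJ: "mmul JJ (ident JJ) Y = Y" if "isop JJ JJ Y" for Y using mmul_ident_left[OF finJ that] .
  have idRJ: "mmul JJ Y (ident JJ) = Y" if "isop JJ JJ Y" for Y using mmul_ident_right[OF finJ that] .
  have Xj: "Xj = scal ((1/mu') * (1/mu')) (ident JJ)"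
    unfolding Xj_def KJ_def KdJ_def
    by (simp add: idLJ idRJ Zi Zdi isop_mmul mu'(3) mmul_scal_left mmul_scal_right scal_scal isop_scal)
  define nu where "nu = (1/mu') * (1/mu')"
  have nu0: "nu \<noteq> 0" using mu'(1) by (simp add: nu_def)
  have K2p: "K2 = prodop NN (\<lambda>q. f2 (u q) (sigma (kP q)) (sigma (kQ q)))"
    unfolding K2_def K_def Kd_def Ud_def sP_def sQ_def U(1)
    by (simp add: adj_prodop prodop_mmul f2_def k1_def k1d_def)
  have fid: "\<forall>q\<in>NN - R2. f2 (u q) (sigma (kP q)) (sigma (kQ q)) = id2"
  proof
    fix q assume q: "q \<in> NN - R2"
    then have uq: "unit2 (u q)" using U(2) by blast
    from q part have "q \<in> R0 \<or> q \<in> R1" by blast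
    then show "f2 (u q) (sigma (kP q)) (sigma (kQ q)) = id2"
    proof
      assume "q \<in> R0"
      then have "sigma (kP q) = id2" using kP(1) by (simp add: sigma0)
      then show ?thesis using f2_R0[OF uq] by simp
    next
      assume "q \<in> R1"
      then have "sigma (kQ q) = id2" using kQ(1) by (simp add: sigma0)
      then show ?thesis using f2_R1[OF uq] by simp
    qed
  qed
  have K2V: "mmul NN (prodop NN (\<lambda>q. f2 (u q) (sigma (kP q)) (sigma (kQ q)))) V = mmul LL V (TT Xs Xj)"
    using intertwine[OF cK2] laK2 K2p by simp
  have Xsi: "isop S S Xs"
    unfolding Xs_def KS_def KdS_def
    by (intro isop_mmul isop_scal isop_adj Wi pauli_isop[OF P] pauli_isop[OF Q])
  have comm: "mmul LL (TT Xs (ident JJ)) (TT AL (ident JJ)) = mmul LL (TT AL (ident JJ)) (TT Xs (ident JJ))"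
    if AL: "isop S S AL" for AL
  proof -
    have "mmul LL (TT Xs Xj) (TT AL (ident JJ)) = mmul LL (TT AL (ident JJ)) (TT Xs Xj)"
      by (rule trivial_region[OF R2 fid K2V TT_isop AL])
    then have "scal nu (mmul LL (TT Xs (ident JJ)) (TT AL (ident JJ))) = scal nu (mmul LL (TT AL (ident JJ)) (TT Xs (ident JJ)))"
      by (simp add: Xj nu_def TT_scal2 mmul_scal_left mmul_scal_right)
    then show ?thesis by (rule scal_cancel[OF nu0])
  qed
  obtain c where c: "Xs = scal c (ident S)"
    using commutant_scalar[OF finS finJ SJ_disj Xsi] comm by (auto simp: TT_def)
  obtain p where p: "p \<noteq> 0" "mmul S P P = scal p (ident S)" using pauli_sq[OF finS P] by blast
  obtain q where q: "q \<noteq> 0" "mmul S Q Q = scal q (ident S)" using pauli_sq[OF finS Q] by blast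
  show ?thesis
    by (rule S_algebra[OF finS Wi pauli_isop[OF P] pauli_isop[OF Q] mu(2) mu'(2) p(2) q(2)
          mu(1) mu'(1) p(1) q(1) kP(2) kQ(2)]) (use c in \<open>simp add: Xs_def KS_def KdS_def\<close>)
qed

end

context qcode
begin

lemma W_cliff2:
  assumes U: "U = prodop NN u" "\<forall>q\<in>NN. unit2 (u q)" "CSP n nL V U"
    and Wi: "isop S S W" and Zi: "isop JJ JJ Z" and laU: "logical_action n V U = TT W Z"
    and R0: "R0 \<subseteq> NN" "correctable n nL V S R0"
    and R1: "R1 \<subseteq> NN" "correctable n nL V S R1"
    and R2: "R2 \<subseteq> NN" "correctable n nL V S R2"
    and part: "NN - R2 \<subseteq> R0 \<union> R1"
  shows "W \<in> cliff S 2"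
proof -
  have main: "mmul S (mmul S (mmul S W P0) (adj W)) (adj P0) \<in> cliff S (Suc 0)"
    if P0: "P0 \<in> cliff S (Suc 0)" for P0
  proof -
    obtain c0 P where P: "P \<in> pauli_ops S" and P0e: "P0 = scal c0 P" using P0 by auto
    define Mt where "Mt = mmul S (mmul S (mmul S W P) (adj W)) P"
    have Mti: "isop S S Mt" unfolding Mt_def by (intro isop_mmul isop_adj Wi pauli_isop[OF P])
    have cc: "\<exists>g. mmul S Mt Q = scal g (mmul S Q Mt)" if "Q \<in> pauli_ops S" for Q
      using core_comm[OF U Wi Zi laU R0 R1 R2 part P that] by (simp add: Mt_def)
    have Zp: "Zop S q \<in> pauli_ops S" for q
      using pauli_opsI[of 1 "\<lambda>r. if r = q then 3 else 0" S] by (simp add: Zop_def)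
    have Xp: "Xop S q \<in> pauli_ops S" for q
      using pauli_opsI[of 1 "\<lambda>r. if r = q then 1 else 0" S] by (simp add: Xop_def)
    have hz: "\<forall>q\<in>S. \<exists>al. \<forall>x\<in>cfgs S. \<forall>y\<in>cfgs S. Mt x y * sgn (y q) = al * (sgn (x q) * Mt x y)"
    proof
      fix q assume q: "q \<in> S"
      obtain g where g: "mmul S Mt (Zop S q) = scal g (mmul S (Zop S q) Mt)" using cc[OF Zp] by blast
      show "\<exists>al. \<forall>x\<in>cfgs S. \<forall>y\<in>cfgs S. Mt x y * sgn (y q) = al * (sgn (x q) * Mt x y)"
      proof (intro exI ballI)
        fix x y assume x: "x \<in> cfgs S" and y: "y \<in> cfgs S"
        have "mmul S Mt (Zop S q) x y = scal g (mmul S (Zop S q) Mt) x y" using g by simp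
        then show "Mt x y * sgn (y q) = g * (sgn (x q) * Mt x y)"
          by (simp add: MZ_right[OF finS q y] MZ_left[OF finS q x] scal_def)
      qed
    qed
    have hx: "\<forall>q\<in>S. \<exists>be. \<forall>x\<in>cfgs S. \<forall>y\<in>cfgs S. Mt x (flip q y) = be * Mt (flip q x) y"
    proof
      fix q assume q: "q \<in> S"
      obtain g where g: "mmul S Mt (Xop S q) = scal g (mmul S (Xop S q) Mt)" using cc[OF Xp] by blast
      show "\<exists>be. \<forall>x\<in>cfgs S. \<forall>y\<in>cfgs S. Mt x (flip q y) = be * Mt (flip q x) y"
      proof (intro exI ballI)
        fix x y assume x: "x \<in> cfgs S" and y: "y \<in> cfgs S"
        have "mmul S Mt (Xop S q) x y = scal g (mmul S (Xop S q) Mt) x y" using g by simp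
        then show "Mt x (flip q y) = g * Mt (flip q x) y"
          by (simp add: MX_right[OF finS q y] MX_left[OF finS q x] scal_def)
      qed
    qed
    obtain c' P' where P': "P' \<in> pauli_ops S" and Mte: "Mt = scal c' P'"
      using pauli_char[OF finS Mti hz hx] by blast
    obtain cP k where cP: "cP \<in> {1, -1, \<i>, - \<i>}" and Pk: "P = scal cP (prodop S (\<lambda>q. sigma (k q)))"
      using P by (auto elim!: pauli_opsE)
    have cP0: "cP \<noteq> 0" using cP by auto
    have adjP: "adj P = scal (cnj cP / cP) P"
      using cP0 by (simp add: Pk adj_scal adj_sigma_prodop scal_scal)
    have "mmul S (mmul S (mmul S W P0) (adj W)) (adj P0) = scal (c0 * cnj c0 * (cnj cP / cP) * c') P'"
      by (simp add: P0e adj_scal adjP mmul_scal_left mmul_scal_right scal_scal Mt_def[symmetric] Mte mult_ac)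
    then show ?thesis using P' by auto
  qed
  show ?thesis using Wi main by (simp add: numeral_2_eq_2)
qed

lemma correctable_empty: "correctable n nL V S {}"
  unfolding correctable_def Let_def
proof (intro allI impI)
  fix AL assume AL: "isop S S AL"
  define Y where "Y = tens S JJ AL (ident JJ)"
  have Yi: "isop LL LL Y" using TT_isop by (simp add: Y_def TT_def)
  define A where "A = mmul LL V (mmul LL Y (adj V))"
  have Ai: "isop NN NN A" unfolding A_def by (intro isop_mmul V_isop Yi isop_adj)
  have tA: "tens (NN - {}) {} A (ident {}) = A"
  proof (rule isop_eqI)
    show "isop NN NN (tens (NN - {}) {} A (ident {}))" using isop_tens[of NN "{}" A "ident {}"] by simp
    show "isop NN NN A" by (rule Ai)
    fix x y assume "x \<in> cfgs NN" "y \<in> cfgs NN"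
    moreover have "rst {} x = e0" "rst {} y = e0" by (auto simp: rst_def e0_def)
    ultimately show "tens (NN - {}) {} A (ident {}) x y = A x y"
      by (simp add: tens_apply ident_apply)
  qed
  have VY: "mmul NN (adj V) (mmul LL V Z) = Z" if "isop LL T Z" for Z T
    by (simp add: mmul_assoc[symmetric] VV mmul_ident_left[OF _ that])
  have c: "CSP n nL V A"
    unfolding CSP_def A_def Pi_def'
    by (simp add: mmul_assoc VY[OF isop_adj[OF V_isop]] VY[OF isop_mmul[OF Yi isop_adj[OF V_isop]]])
  have l: "logical_action n V A = Y"
    unfolding logical_action_def A_def
    by (simp add: mmul_assoc VY[OF isop_mmul[OF Yi isop_adj[OF V_isop]]])
      (simp add: mmul_assoc[symmetric] VV mmul_ident_right[OF _ Yi] mmul_ident_left[OF _ Yi])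
  show "\<exists>A. isop (NN - {}) (NN - {}) A \<and> CSP n nL V (tens (NN - {}) {} A (ident {})) \<and>
          logical_action n V (tens (NN - {}) {} A (ident {})) = tens S JJ AL (ident JJ)"
    using Ai c l tA by (intro exI[of _ A]) (simp add: Y_def)
qed

end

context qcode
begin

lemma regions:
  assumes p2: "2 \<le> code_price n nL V S"
    and pd: "int (code_price n nL V S) \<le> 2 * int (code_distance n nL V S) - 2"
  shows "\<exists>R0 R1 R2. R0 \<subseteq> NN \<and> correctable n nL V S R0 \<and> R1 \<subseteq> NN \<and> correctable n nL V S R1 \<and>
     R2 \<subseteq> NN \<and> correctable n nL V S R2 \<and> NN - R2 \<subseteq> R0 \<union> R1"
proof -
  define PS where "PS = {card R | R. R \<subseteq> NN \<and> correctable n nL V S (NN - R)}"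
  define DS where "DS = {card R | R. R \<subseteq> NN \<and> \<not> correctable n nL V S R}"
  define p where "p = code_price n nL V S"
  define d where "d = code_distance n nL V S"
  have pPS: "p = Inf PS" by (simp add: p_def PS_def code_price_def)
  have dDS: "d = Inf DS" by (simp add: d_def DS_def code_distance_def)
  have "card NN \<in> PS" unfolding PS_def using correctable_empty
    by (intro CollectI exI[of _ NN]) simp
  then have "PS \<noteq> {}" by blast
  then have "p \<in> PS" unfolding pPS by (rule Inf_nat_def1)
  then obtain R where R: "R \<subseteq> NN" "card R = p" "correctable n nL V S (NN - R)"
    unfolding PS_def by blast
  have small: "correctable n nL V S T" if "T \<subseteq> NN" "card T < d" for T
  proof (rule ccontr)
    assume "\<not> correctable n nL V S T"
    then have "card T \<in> DS" using that(1) unfolding DS_def by blast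
    then have "d \<le> card T" unfolding dDS by (rule cInf_lower) simp
    then show False using that(2) by simp
  qed
  have pd': "int p \<le> 2 * int d - 2" "2 \<le> p" using pd p2 by (simp_all add: p_def d_def)
  have h1: "p div 2 < d" using pd' by linarith
  have h2: "p - p div 2 < d" using pd' by linarith
  have fR: "finite R" using R(1) finite_subset by blast
  obtain R1 where R1: "R1 \<subseteq> R" "card R1 = p div 2" "finite R1"
    using obtain_subset_with_card_n[of "p div 2" R] R(2) by auto
  define R2 where "R2 = R - R1"
  have cR2: "card R2 = p - p div 2" unfolding R2_def using card_Diff_subset[OF R1(3) R1(1)] R1(2) R(2) by simp
  show ?thesis
  proof (intro exI conjI)
    show "NN - R \<subseteq> NN" by blast
    show "correctable n nL V S (NN - R)" by (rule R(3))
    show "R1 \<subseteq> NN" using R1(1) R(1) by blast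
    show "correctable n nL V S R1" using small[of R1] R1 R(1) h1 by auto
    show "R2 \<subseteq> NN" using R(1) by (auto simp: R2_def)
    show "correctable n nL V S R2" using small[of R2] R(1) cR2 h2 by (auto simp: R2_def)
    show "NN - R2 \<subseteq> (NN - R) \<union> R1" by (auto simp: R2_def)
  qed
qed

end

theorem lemma9:
  fixes n nL :: nat and G :: "qop set" and V U :: qop and S :: "nat set"
  assumes "stabilizer_code n nL G V"
    and "S \<subseteq> {..<nL}"
    and "2 \<le> code_price n nL V S"
    and "int (code_price n nL V S) \<le> 2 * int (code_distance n nL V S) - 2"
    and "transversal n U"
    and "dressed_CSP n nL V S U"
  shows "\<exists>UL UJ. isop S S UL \<and> isop ({..<nL} - S) ({..<nL} - S) UJ \<and>
           logical_action n V U = tens S ({..<nL} - S) UL UJ \<and> UL \<in> cliff S 2"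
proof -
  interpret qcode n nL G V S using assms(1,2) by unfold_locales
  obtain UL UJ where c: "CSP n nL V U" and UL: "isop S S UL" and UJ: "isop ({..<nL} - S) ({..<nL} - S) UJ"
    and la: "logical_action n V U = tens S ({..<nL} - S) UL UJ"
    using assms(6) unfolding dressed_CSP_def by blast
  obtain u where u: "\<forall>q<n. unitary1 (u q)" and Ue: "U = restr {..<n} {..<n} (\<lambda>x y. \<Prod>q\<in>{..<n}. u q (x q) (y q))"
    using assms(5) unfolding transversal_def by blast
  have Up: "U = prodop {..<n} u" using Ue by (simp add: prodop_def)
  have u2: "\<forall>q\<in>{..<n}. unit2 (u q)" using u unitary1_unit2 by auto
  obtain R0 R1 R2 where R: "R0 \<subseteq> {..<n}" "correctable n nL V S R0" "R1 \<subseteq> {..<n}" "correctable n nL V S R1"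
     "R2 \<subseteq> {..<n}" "correctable n nL V S R2" "{..<n} - R2 \<subseteq> R0 \<union> R1"
    using regions[OF assms(3,4)] by blast
  have "UL \<in> cliff S 2"
    by (rule W_cliff2[OF Up u2 c UL UJ _ R]) (simp add: la TT_def)
  then show ?thesis using UL UJ la by blast
qed


end
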